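(* Say that $g\in L^2(\mathbb{R})$ satisfies $(\ast)$ if there is $C>0$ with $$\int_{|t|\geq R}|g(t)|^2dt+\int_{|\xi|\geq L}|\hat g(\xi)|^2d\xi\geq\frac{C}{RL}\quad\text{for all }R,L\geq1,$$ and satisfies $(\ast\ast)$ if $\sum_{n\in\mathbb{Z}}\|g\|_{L^\infty[n,n+1]}=\infty$ or $\sum_{n\in\mathbb{Z}}\|\hat g\|_{L^\infty[n,n+1]}=\infty$. Then there exists $g\in L^2(\mathbb{R})$ satisfying $(\ast)$ but not $(\ast\ast)$, and there exists $g\in L^2(\mathbb{R})$ satisfying $(\ast\ast)$ but not $(\ast)$.
   Context: $\hat g(\xi)=\int g(t)e^{-2\pi i\xi t}dt$ denotes the Fourier transform, extended to $L^2(\mathbb{R})$. *)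

theory Defs
  imports "HOL-Analysis.Analysis"
begin

definition square_integrable :: "(real \<Rightarrow> complex) \<Rightarrow> bool" where
  "square_integrable g \<longleftrightarrow> g \<in> borel_measurable lborel \<and>
     (\<integral>\<^sup>+ t. ennreal (norm (g t)) ^ 2 \<partial>lborel) < \<infinity>"

definition fourier_trunc :: "(real \<Rightarrow> complex) \<Rightarrow> real \<Rightarrow> real \<Rightarrow> complex" where
  "fourier_trunc g N \<xi> = (LINT t:{-N..N}|lborel. g t * cis (- 2 * pi * \<xi> * t))"

text \<open>G is (a representative of) the L^2 Fourier transform of g: the L^2 limit of the
  truncated Fourier integrals (Plancherel extension).\<close>
definition is_L2_fourier :: "(real \<Rightarrow> complex) \<Rightarrow> (real \<Rightarrow> complex) \<Rightarrow> bool" where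
  "is_L2_fourier g G \<longleftrightarrow> square_integrable G \<and>
     ((\<lambda>N. \<integral>\<^sup>+ \<xi>. ennreal (norm (G \<xi> - fourier_trunc g N \<xi>)) ^ 2 \<partial>lborel) \<longlongrightarrow> 0) at_top"

text \<open>Essential supremum of |f| on [a,b] (the L^infinity[a,b] norm), as an ennreal.\<close>
definition Linf_norm_on :: "(real \<Rightarrow> complex) \<Rightarrow> real \<Rightarrow> real \<Rightarrow> ennreal" where
  "Linf_norm_on f a b = Inf {M. AE t in lborel. t \<in> {a..b} \<longrightarrow> ennreal (norm (f t)) \<le> M}"

definition cond_star :: "(real \<Rightarrow> complex) \<Rightarrow> (real \<Rightarrow> complex) \<Rightarrow> bool" where
  "cond_star g G \<longleftrightarrow> (\<exists>C>0. \<forall>R L. R \<ge> 1 \<longrightarrow> L \<ge> 1 \<longrightarrow>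
     (\<integral>\<^sup>+ t. indicator {t. \<bar>t\<bar> \<ge> R} t * ennreal (norm (g t)) ^ 2 \<partial>lborel)
     + (\<integral>\<^sup>+ \<xi>. indicator {\<xi>. \<bar>\<xi>\<bar> \<ge> L} \<xi> * ennreal (norm (G \<xi>)) ^ 2 \<partial>lborel)
     \<ge> ennreal (C / (R * L)))"

definition cond_star_star :: "(real \<Rightarrow> complex) \<Rightarrow> (real \<Rightarrow> complex) \<Rightarrow> bool" where
  "cond_star_star g G \<longleftrightarrow>
     (\<integral>\<^sup>+ n. Linf_norm_on g (real_of_int n) (real_of_int n + 1) \<partial>count_space (UNIV :: int set)) = \<infinity>
   \<or> (\<integral>\<^sup>+ n. Linf_norm_on G (real_of_int n) (real_of_int n + 1) \<partial>count_space (UNIV :: int set)) = \<infinity>"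

end

theory Submission
  imports Defs "HOL-Real_Asymp.Real_Asymp" "HOL-Library.Nat_Bijection"
begin


definition tri :: "real \<Rightarrow> real \<Rightarrow> real" where
  "tri b t = max 0 (1 - \<bar>t\<bar> / b)"

definition ftt :: "real \<Rightarrow> real \<Rightarrow> real" where
  "ftt b \<xi> = (if \<xi> = 0 then b else (1 - cos (2*pi*\<xi>*b)) / (2*pi^2*\<xi>^2*b))"

lemma FR_deriv:
  fixes w b :: real assumes "w \<noteq> 0" "b > 0"
  shows "((\<lambda>t. (1 - of_real t / of_real b) * (\<i> / of_real w) * exp (- \<i> * of_real w * of_real t)
          - exp (- \<i> * of_real w * of_real t) / (of_real b * of_real w ^ 2)) has_vector_derivative
        (complex_of_real (1 - t/b) * cis (- w * t))) (at t within S)"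
proof -
  have "((\<lambda>z. (1 - z / of_real b) * (\<i> / of_real w) * exp (- \<i> * of_real w * z)
          - exp (- \<i> * of_real w * z) / (of_real b * of_real w ^ 2)) has_field_derivative
        (complex_of_real (1 - t/b) * cis (- w * t))) (at (of_real t))"
    using assms by (auto intro!: derivative_eq_intros simp: cis_conv_exp field_simps power2_eq_square)
  then show ?thesis by (rule has_vector_derivative_real_field)
qed

lemma FL_deriv:
  fixes w b :: real assumes "w \<noteq> 0" "b > 0"
  shows "((\<lambda>t. (1 + of_real t / of_real b) * (\<i> / of_real w) * exp (- \<i> * of_real w * of_real t)
          + exp (- \<i> * of_real w * of_real t) / (of_real b * of_real w ^ 2)) has_vector_derivative
        (complex_of_real (1 + t/b) * cis (- w * t))) (at t within S)"
proof -
  have "((\<lambda>z. (1 + z / of_real b) * (\<i> / of_real w) * exp (- \<i> * of_real w * z)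
          + exp (- \<i> * of_real w * z) / (of_real b * of_real w ^ 2)) has_field_derivative
        (complex_of_real (1 + t/b) * cis (- w * t))) (at (of_real t))"
    using assms by (auto intro!: derivative_eq_intros simp: cis_conv_exp field_simps power2_eq_square)
  then show ?thesis by (rule has_vector_derivative_real_field)
qed

lemma F0R_deriv:
  fixes b :: real assumes "b > 0"
  shows "((\<lambda>t. of_real t - of_real t ^ 2 / (2 * of_real b)) has_vector_derivative
        (complex_of_real (1 - t/b) * cis (- 0 * t))) (at t within S)"
proof -
  have "((\<lambda>z. z - z ^ 2 / (2 * of_real b)) has_field_derivative
        (complex_of_real (1 - t/b) * cis (- 0 * t))) (at (of_real t))"
    using assms by (auto intro!: derivative_eq_intros simp: field_simps power2_eq_square)
  then show ?thesis by (rule has_vector_derivative_real_field)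
qed

lemma F0L_deriv:
  fixes b :: real assumes "b > 0"
  shows "((\<lambda>t. of_real t + of_real t ^ 2 / (2 * of_real b)) has_vector_derivative
        (complex_of_real (1 + t/b) * cis (- 0 * t))) (at t within S)"
proof -
  have "((\<lambda>z. z + z ^ 2 / (2 * of_real b)) has_field_derivative
        (complex_of_real (1 + t/b) * cis (- 0 * t))) (at (of_real t))"
    using assms by (auto intro!: derivative_eq_intros simp: field_simps power2_eq_square)
  then show ?thesis by (rule has_vector_derivative_real_field)
qed

lemma tri_hasint:
  assumes b: "b > 0"
  shows "((\<lambda>t. complex_of_real (tri b t) * cis (- (2*pi*\<xi>) * t)) has_integral complex_of_real (ftt b \<xi>)) {-b..b}"
proof -
  define w where "w = 2*pi*\<xi>"
  let ?h = "\<lambda>t. complex_of_real (tri b t) * cis (- w * t)"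
  have hR: "\<And>t. t \<in> {0..b} \<Longrightarrow> ?h t = complex_of_real (1 - t/b) * cis (- w * t)"
    using b by (auto simp: tri_def max_def field_simps)
  have hL: "\<And>t. t \<in> {-b..0} \<Longrightarrow> ?h t = complex_of_real (1 + t/b) * cis (- w * t)"
    using b by (auto simp: tri_def max_def field_simps)
  show ?thesis
  proof (cases "\<xi> = 0")
    case True
    then have w0: "w = 0" by (simp add: w_def)
    have R: "(?h has_integral (of_real b - of_real b ^ 2 / (2 * of_real b) - (of_real 0 - of_real 0 ^ 2 / (2 * of_real b)))) {0..b}"
      apply (rule has_integral_eq[OF hR[symmetric]], assumption)
      unfolding w0
      apply (rule fundamental_theorem_of_calculus)
      using b F0R_deriv[OF b] by auto
    have L: "(?h has_integral (of_real 0 + of_real 0 ^ 2 / (2 * of_real b) - (of_real (-b) + of_real (-b) ^ 2 / (2 * of_real b)))) {-b..0}"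
      apply (rule has_integral_eq[OF hL[symmetric]], assumption)
      unfolding w0
      apply (rule fundamental_theorem_of_calculus)
      using b F0L_deriv[OF b] by auto
    have "(?h has_integral ((of_real 0 + of_real 0 ^ 2 / (2 * of_real b) - (of_real (-b) + of_real (-b) ^ 2 / (2 * of_real b))) + (of_real b - of_real b ^ 2 / (2 * of_real b) - (of_real 0 - of_real 0 ^ 2 / (2 * of_real b))))) {-b..b}"
      by (rule has_integral_combine[OF _ _ L R]) (use b in auto)
    then show ?thesis using b True by (simp add: ftt_def w_def power2_eq_square field_simps)
  next
    case False
    then have w0: "w \<noteq> 0" by (simp add: w_def)
    define FR where "FR = (\<lambda>t. (1 - of_real t / of_real b) * (\<i> / of_real w) * exp (- \<i> * of_real w * of_real t)
          - exp (- \<i> * of_real w * of_real t) / (of_real b * of_real w ^ 2) :: complex)"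
    define FL where "FL = (\<lambda>t. (1 + of_real t / of_real b) * (\<i> / of_real w) * exp (- \<i> * of_real w * of_real t)
          + exp (- \<i> * of_real w * of_real t) / (of_real b * of_real w ^ 2) :: complex)"
    have R: "(?h has_integral (FR b - FR 0)) {0..b}"
      apply (rule has_integral_eq[OF hR[symmetric]], assumption)
      apply (rule fundamental_theorem_of_calculus)
      using b FR_deriv[OF w0 b] by (auto simp: FR_def)
    have L: "(?h has_integral (FL 0 - FL (-b))) {-b..0}"
      apply (rule has_integral_eq[OF hL[symmetric]], assumption)
      apply (rule fundamental_theorem_of_calculus)
      using b FL_deriv[OF w0 b] by (auto simp: FL_def)
    have I: "(?h has_integral (FL 0 - FL (-b) + (FR b - FR 0))) {-b..b}"
      by (rule has_integral_combine[OF _ _ L R]) (use b in auto)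
    have e1: "exp (- \<i> * of_real w * of_real b) = cis (- (w*b))"
      by (simp add: cis_conv_exp mult.assoc)
    have e2: "exp (- \<i> * of_real w * of_real (-b)) = cis (w*b)"
      by (simp add: cis_conv_exp mult.assoc)
    have "FL 0 - FL (-b) + (FR b - FR 0) = (2 - cis (w*b) - cis (-(w*b))) / (of_real b * of_real w ^ 2)"
      unfolding FL_def FR_def e1 e2 using b w0 by (simp add: field_simps)
    also have "\<dots> = complex_of_real ((2 - 2 * cos (w*b)) / (b * w^2))"
      by (simp add: cis.code complex_eq_iff)
    also have "\<dots> = complex_of_real (ftt b \<xi>)"
      using False b by (simp add: ftt_def w_def power2_eq_square field_simps)
    finally show ?thesis using I by (simp add: w_def)
  qed
qed

lemma tri_cont: "continuous_on S (\<lambda>t. tri b t)"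
  unfolding tri_def divide_inverse by (intro continuous_intros)

lemma tri_cis_cont: "continuous_on S (\<lambda>t. complex_of_real (tri b t) * cis (a * t))"
  unfolding tri_def cis_conv_exp divide_inverse by (intro continuous_intros)

lemma tri_zero: "b > 0 \<Longrightarrow> b \<le> \<bar>t\<bar> \<Longrightarrow> tri b t = 0"
  by (auto simp: tri_def max_def field_simps)

lemma tri_nonneg: "0 \<le> tri b t"
  by (simp add: tri_def)

lemma tri_le1: "b > 0 \<Longrightarrow> tri b t \<le> 1"
  by (simp add: tri_def)

lemma tri_cis_set_integrable:
  "set_integrable lborel {a..c} (\<lambda>t. complex_of_real (tri b t) * cis (e * t))"
  unfolding set_integrable_def
  by (rule borel_integrable_compact) (auto intro: tri_cis_cont)

lemma ft_tri:
  assumes b: "b > 0" and N: "b \<le> N"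
  shows "(LINT t:{-N..N}|lborel. complex_of_real (tri b t) * cis (- (2*pi*\<xi>) * t)) = complex_of_real (ftt b \<xi>)"
proof -
  let ?h = "\<lambda>t. complex_of_real (tri b t) * cis (- (2*pi*\<xi>) * t)"
  have "(?h has_integral complex_of_real (ftt b \<xi>)) {-N..N}"
    apply (rule has_integral_on_superset[OF tri_hasint[OF b]])
    using b N by (auto simp: tri_zero)
  moreover have "(LINT t:{-N..N}|lborel. ?h t) = integral {-N..N} ?h"
    by (rule set_borel_integral_eq_integral(2)[OF tri_cis_set_integrable])
  ultimately show ?thesis by (simp add: integral_unique)
qed



lemma one_minus_cos_le: "1 - cos (x::real) \<le> x^2 / 2"
proof -
  have "cos x = cos (2 * (x/2))" by simp
  also have "\<dots> = 1 - 2 * (sin (x/2))^2" by (rule cos_double_sin)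
  finally have e: "1 - cos x = 2 * (sin (x/2))^2" by simp
  have "(sin (x/2))^2 \<le> (x/2)^2"
    using abs_sin_x_le_abs_x[of "x/2"] by (metis abs_le_square_iff)
  then show ?thesis using e by (simp add: power2_eq_square field_simps)
qed

lemma ftt_nonneg: "b > 0 \<Longrightarrow> 0 \<le> ftt b \<xi>"
  by (simp add: ftt_def)

lemma ftt_le: assumes "b > 0" shows "ftt b \<xi> \<le> b"
proof (cases "\<xi> = 0")
  case False
  have "1 - cos (2*pi*\<xi>*b) \<le> (2*pi*\<xi>*b)^2/2" by (rule one_minus_cos_le)
  then have "1 - cos (2*pi*\<xi>*b) \<le> b * (2*pi^2*\<xi>^2*b)" by (simp add: power2_eq_square field_simps)
  moreover have "0 < 2*pi^2*\<xi>^2*b" using False assms by simp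
  ultimately show ?thesis using False by (simp add: ftt_def divide_le_eq)
qed (simp add: ftt_def)

lemma ftt_le2: assumes "b > 0" "\<xi> \<noteq> 0" shows "ftt b \<xi> \<le> 1 / (\<xi>^2 * b)"
proof -
  have "1 * 1 \<le> pi * pi" using pi_gt3 by (intro mult_mono) auto
  then have p: "1 \<le> pi^2" by (simp add: power2_eq_square)
  have "1 - cos (2*pi*\<xi>*b) \<le> 2" using cos_ge_minus_one[of "2*pi*\<xi>*b"] by linarith
  also have "2 \<le> 2 * pi^2" using p by simp
  finally have "1 - cos (2*pi*\<xi>*b) \<le> (1 / (\<xi>^2 * b)) * (2*pi^2*\<xi>^2*b)" using assms by (simp add: field_simps)
  moreover have "0 < 2*pi^2*\<xi>^2*b" using assms by simp
  ultimately show ?thesis using assms by (simp add: ftt_def divide_le_eq)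
qed

lemma ftt_lower: assumes "1/4 \<le> \<xi>" "\<xi> \<le> 1/2" shows "1/8 \<le> ftt 1 \<xi>"
proof -
  have "cos (2*pi*\<xi>) \<le> 0"
  proof -
    have "cos (2*pi*\<xi>) = - sin (2*pi*\<xi> - pi/2)" by (simp add: sin_diff)
    also have "\<dots> \<le> 0"
      using assms by (intro neg_le_0_iff_le[THEN iffD2] sin_ge_zero) (auto simp: field_simps)
    finally show ?thesis .
  qed
  moreover have "2*pi^2*\<xi>^2 \<le> 8"
  proof -
    have "\<xi>*\<xi> \<le> (1/2)*(1/2)" using assms by (intro mult_mono) auto
    then have "\<xi>^2 \<le> 1/4" by (simp add: power2_eq_square)
    moreover have "pi*pi \<le> 4*4" using pi_less_4 pi_gt3 by (intro mult_mono) auto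
    then have "pi^2 \<le> 16" by (simp add: power2_eq_square)
    ultimately have "pi^2 * \<xi>^2 \<le> 16 * (1/4)" by (intro mult_mono) auto
    then show ?thesis by simp
  qed
  moreover have "0 < 2*pi^2*\<xi>^2" using assms by simp
  ultimately have "1/8 \<le> (1 - cos (2*pi*\<xi>)) / (2*pi^2*\<xi>^2)"
    by (simp add: le_divide_eq)
  then show ?thesis using assms by (simp add: ftt_def)
qed

lemma ftt_meas[measurable]: "ftt b \<in> borel_measurable borel"
  unfolding ftt_def by measurable



lemma two_ennreal: "0 \<le> x \<Longrightarrow> 2 * ennreal x = ennreal (2*x)"
  by (simp add: ennreal_mult)

lemma tail_even:
  fixes f :: "real \<Rightarrow> real"
  assumes [measurable]: "f \<in> borel_measurable borel" and ev: "\<And>x. f (-x) = f x" and a: "a > 0"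
  shows "(\<integral>\<^sup>+\<xi>. indicator {\<xi>. a \<le> \<bar>\<xi>\<bar>} \<xi> * ennreal (f \<xi>) \<partial>lborel)
       = 2 * (\<integral>\<^sup>+\<xi>. ennreal (f \<xi>) * indicator {a..} \<xi> \<partial>lborel)"
proof -
  let ?h = "\<lambda>\<xi>. ennreal (f \<xi>) * indicator {a..} \<xi>"
  have pw: "indicator {\<xi>. a \<le> \<bar>\<xi>\<bar>} \<xi> * ennreal (f \<xi>) = ?h \<xi> + ?h (0 + (-1) * \<xi>)" for \<xi>
    using a ev[of \<xi>] by (auto simp: indicator_def)
  have refl: "(\<integral>\<^sup>+\<xi>. ennreal (f (-\<xi>)) * indicator {a..} (-\<xi>) \<partial>lborel) = (\<integral>\<^sup>+\<xi>. ?h \<xi> \<partial>lborel)"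
    using nn_integral_real_affine[of ?h "-1" 0] by simp
  show ?thesis
    unfolding pw by (subst nn_integral_add) (auto simp: refl mult_2 simp del: ev)
qed

lemma tail_sq:
  assumes a: "a > 0"
  shows "(\<integral>\<^sup>+\<xi>. indicator {\<xi>. a \<le> \<bar>\<xi>\<bar>} \<xi> * ennreal (1 / \<xi>^2) \<partial>lborel) = ennreal (2 / a)"
proof -
  have "(\<integral>\<^sup>+\<xi>. ennreal (1 / \<xi>^2) * indicator {a..} \<xi> \<partial>lborel) = 0 - (- 1 / a)"
  proof (rule nn_integral_FTC_atLeast)
    show "((\<lambda>x::real. - 1 / x) \<longlongrightarrow> 0) at_top" by real_asymp
    fix x assume "a \<le> x"
    then show "((\<lambda>x::real. - 1 / x) has_real_derivative 1 / x^2) (at x)"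
      using a by (auto intro!: derivative_eq_intros simp: power2_eq_square)
  qed auto
  then show ?thesis
    by (subst tail_even) (use a in \<open>auto simp: two_ennreal\<close>)
qed

lemma tail_4:
  assumes a: "a > 0"
  shows "(\<integral>\<^sup>+\<xi>. indicator {\<xi>. a \<le> \<bar>\<xi>\<bar>} \<xi> * ennreal (1 / \<xi>^4) \<partial>lborel) = ennreal (2 / (3 * a^3))"
proof -
  have "(\<integral>\<^sup>+\<xi>. ennreal (1 / \<xi>^4) * indicator {a..} \<xi> \<partial>lborel) = 0 - (- 1 / (3 * a^3))"
  proof (rule nn_integral_FTC_atLeast)
    show "((\<lambda>x::real. - 1 / (3 * x^3)) \<longlongrightarrow> 0) at_top" by real_asymp
    fix x assume "a \<le> x"
    then show "((\<lambda>x::real. - 1 / (3 * x^3)) has_real_derivative 1 / x^4) (at x)"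
      using a by (auto intro!: derivative_eq_intros simp: field_simps eval_nat_numeral)
  qed auto
  then show ?thesis
    by (subst tail_even) (use a in \<open>auto simp: two_ennreal\<close>)
qed



lemma ftt_int:
  assumes b: "b > 0"
  shows "(\<integral>\<^sup>+\<xi>. ennreal (ftt b \<xi>) \<partial>lborel) \<le> 4"
proof -
  have pw: "ennreal (ftt b \<xi>) \<le> ennreal b * indicator {-1/b..1/b} \<xi>
     + ennreal (1/b) * (indicator {\<xi>. 1/b \<le> \<bar>\<xi>\<bar>} \<xi> * ennreal (1/\<xi>^2))" for \<xi>
  proof (cases "\<bar>\<xi>\<bar> \<le> 1/b")
    case True
    then have "ennreal (ftt b \<xi>) \<le> ennreal b * indicator {-1/b..1/b} \<xi>"
      using ftt_le[OF b, of \<xi>] by (auto simp: indicator_def intro!: ennreal_leI)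
    then show ?thesis by (rule order_trans) simp
  next
    case False
    then have "\<xi> \<noteq> 0" "1/b \<le> \<bar>\<xi>\<bar>" using b by auto
    then have "ftt b \<xi> \<le> (1/b) * (1/\<xi>^2)" using ftt_le2[OF b] by (simp add: field_simps)
    then have "ennreal (ftt b \<xi>) \<le> ennreal (1/b) * (indicator {\<xi>. 1/b \<le> \<bar>\<xi>\<bar>} \<xi> * ennreal (1/\<xi>^2))"
      using \<open>1/b \<le> \<bar>\<xi>\<bar>\<close> b by (simp add: ennreal_mult[symmetric] ennreal_leI)
    then show ?thesis by (rule order_trans) simp
  qed
  have "(\<integral>\<^sup>+\<xi>. ennreal (ftt b \<xi>) \<partial>lborel) \<le> (\<integral>\<^sup>+\<xi>. ennreal b * indicator {-1/b..1/b} \<xi>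
     + ennreal (1/b) * (indicator {\<xi>. 1/b \<le> \<bar>\<xi>\<bar>} \<xi> * ennreal (1/\<xi>^2)) \<partial>lborel)"
    by (rule nn_integral_mono) (rule pw)
  also have "\<dots> = ennreal b * ennreal (2/b) + ennreal (1/b) * ennreal (2 / (1/b))"
    using b by (subst nn_integral_add) (auto simp: nn_integral_cmult tail_sq)
  also have "\<dots> = 4"
    using b by (simp add: ennreal_mult[symmetric] del: ennreal_numeral) (simp add: field_simps)
  finally show ?thesis .
qed

lemma ftt_int_shift:
  assumes b: "b > 0"
  shows "(\<integral>\<^sup>+\<xi>. ennreal (ftt b (\<xi> - s)) \<partial>lborel) \<le> 4"
proof -
  have "(\<integral>\<^sup>+\<xi>. ennreal (ftt b (\<xi> - s)) \<partial>lborel) = (\<integral>\<^sup>+\<xi>. ennreal (ftt b \<xi>) \<partial>lborel)"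
    using nn_integral_real_affine[of "\<lambda>\<xi>. ennreal (ftt b (\<xi> - s))" 1 s] by simp
  then show ?thesis using ftt_int[OF b] by simp
qed

lemma ftt_prod_int:
  assumes "b > 0" "c > 0"
  shows "(\<integral>\<^sup>+\<xi>. ennreal (ftt b \<xi>) * ennreal (ftt c \<xi>) \<partial>lborel) \<le> ennreal (4 * c)"
proof -
  have "(\<integral>\<^sup>+\<xi>. ennreal (ftt b \<xi>) * ennreal (ftt c \<xi>) \<partial>lborel) \<le> (\<integral>\<^sup>+\<xi>. ennreal (ftt b \<xi>) * ennreal c \<partial>lborel)"
    using ftt_le[OF assms(2)] by (intro nn_integral_mono mult_left_mono ennreal_leI) auto
  also have "\<dots> = (\<integral>\<^sup>+\<xi>. ennreal (ftt b \<xi>) \<partial>lborel) * ennreal c"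
    by (simp add: nn_integral_multc)
  also have "\<dots> \<le> 4 * ennreal c"
    using ftt_int[OF assms(1)] by (intro mult_right_mono) auto
  finally show ?thesis using assms by (simp add: ennreal_mult)
qed



definition bt :: "nat \<Rightarrow> real" where "bt k = (1/4)^(4^k)"
definition dt :: "nat \<Rightarrow> real" where "dt k = (1/2)^(4^k)"

lemma bt_pos: "0 < bt k" by (simp add: bt_def)
lemma dt_pos: "0 < dt k" by (simp add: dt_def)
lemma bt_dt: "bt k = dt k ^ 2"
  by (simp add: bt_def dt_def power_mult_distrib[symmetric] power_mult[symmetric] mult.commute)
    (simp add: power_mult power2_eq_square power_mult_distrib)

lemma four_pow_ge: "k \<le> (4::nat)^k"
proof -
  have "k < 2^k" by (rule less_exp)
  also have "(2::nat)^k \<le> 4^k" by (rule power_mono) auto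
  finally show ?thesis by simp
qed

lemma bt_le_geom: "bt k \<le> (1/4)^k"
  unfolding bt_def by (rule power_decreasing) (auto simp: four_pow_ge)
lemma dt_le_geom: "dt k \<le> (1/2)^k"
  unfolding dt_def by (rule power_decreasing) (auto simp: four_pow_ge)
lemma bt_le1: "bt k \<le> 1" unfolding bt_def by (simp add: power_le_one)
lemma bt_anti: "k \<le> K \<Longrightarrow> bt K \<le> bt k"
  unfolding bt_def by (rule power_decreasing) auto

lemma summable_bt: "summable bt"
  by (rule summable_comparison_test[OF _ summable_geometric[of "1/4::real"]])
     (use bt_le_geom bt_pos in \<open>auto simp: less_imp_le\<close>)
lemma summable_dt: "summable dt"
  by (rule summable_comparison_test[OF _ summable_geometric[of "1/2::real"]])
     (use dt_le_geom dt_pos in \<open>auto simp: less_imp_le\<close>)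

lemma pow4_add_ge: "(4::nat)^m + d \<le> 4^(m+d)"
proof -
  have "d + 1 \<le> 4^d" using four_pow_ge[of d] by (induct d) auto
  have a: "1 \<le> (4::nat)^m" by simp
  have "(4::nat)^m + d \<le> 4^m + 4^m * d" using a by simp
  also have "\<dots> = 4^m * (d+1)" by (simp add: algebra_simps)
  also have "\<dots> \<le> 4^m * 4^d" using mult_left_mono[OF \<open>d + 1 \<le> 4^d\<close>, of "4^m"] by simp
  finally show ?thesis by (simp add: power_add)
qed

lemma dt_tail: "(\<Sum>i. dt (i + Suc K)) \<le> 2 * dt (Suc K)"
proof -
  have le: "dt (i + Suc K) \<le> dt (Suc K) * (1/2)^i" for i
  proof -
    have "dt (i + Suc K) = (1/2)^(4^(Suc K + i))" by (simp add: dt_def add.commute)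
    also have "\<dots> \<le> (1/2)^(4^(Suc K) + i)"
      apply (rule power_decreasing) using pow4_add_ge[of "Suc K" i] by auto
    also have "\<dots> = dt (Suc K) * (1/2)^i" by (simp add: dt_def power_add)
    finally show ?thesis .
  qed
  have "(\<Sum>i. dt (i + Suc K)) \<le> (\<Sum>i. dt (Suc K) * (1/2)^i)"
  proof (rule suminf_le[OF le])
    show "summable (\<lambda>i. dt (i + Suc K))" using summable_iff_shift[of dt "Suc K"] summable_dt by blast
  qed (auto intro!: summable_mult summable_geometric)
  also have "\<dots> = 2 * dt (Suc K)"
    by (subst suminf_mult) (auto intro!: summable_geometric simp: suminf_geometric)
  finally show ?thesis .
qed

lemma inv_bt_sum: "(\<Sum>k<Suc K. 1 / bt k) \<le> 2 / bt K"
proof (induct K)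
  case 0 then show ?case by (simp add: bt_def)
next
  case (Suc K)
  have "1 / bt (Suc K) = (1 / bt K)^4"
    by (simp add: bt_def power_mult[symmetric] power_divide mult.commute)
  moreover have "4 \<le> 1 / bt K" using bt_le1[of K] bt_pos[of K]
  proof -
    have "1/bt K = 4^(4^K)" by (simp add: bt_def power_divide)
    also have "(4::real) \<le> 4^(4^K)" by (rule power_increasing[where n=1, simplified]) auto
    finally show ?thesis by simp
  qed
  moreover have "2 * x \<le> x^4" if "4 \<le> x" for x :: real
  proof -
    have "(2::real) \<le> 4^3" by simp
    also have "(4::real)^3 \<le> x^3" using that by (intro power_mono) auto
    finally have "x * 2 \<le> x * x^3" using that by (intro mult_left_mono) auto
    then show ?thesis by (simp add: power_numeral_reduce mult.commute)
  qed
  ultimately have "2 * (1 / bt K) \<le> 1 / bt (Suc K)" by metis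
  then show ?case using Suc by simp
qed



lemma tri_meas[measurable]: "(\<lambda>t. tri b t) \<in> borel_measurable borel"
  unfolding tri_def by measurable

lemma dsum:
  assumes "\<And>i. 0 \<le> x i" "summable x"
  shows "(\<Sum>i. \<Sum>j. ennreal (x i * x j)) = ennreal ((\<Sum>i. x i)^2)"
proof -
  have "(\<Sum>i. \<Sum>j. ennreal (x i * x j)) = (\<Sum>i. ennreal (x i) * (\<Sum>j. ennreal (x j)))"
    using assms by (simp add: ennreal_mult)
  also have "\<dots> = (\<Sum>i. ennreal (x i)) * (\<Sum>j. ennreal (x j))" by simp
  also have "\<dots> = ennreal ((\<Sum>i. x i)^2)"
    using assms by (simp add: suminf_ennreal2 power2_eq_square ennreal_mult suminf_nonneg)
  finally show ?thesis .
qed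

lemma sq_suminf_int:
  assumes [measurable]: "\<And>i. f i \<in> borel_measurable lborel"
  shows "(\<integral>\<^sup>+x. (\<Sum>i. ennreal (f i x))^2 \<partial>lborel)
       = (\<Sum>i. \<Sum>j. \<integral>\<^sup>+x. ennreal (f i x) * ennreal (f j x) \<partial>lborel)"
proof -
  have "(\<Sum>i. ennreal (f i x))^2 = (\<Sum>i. \<Sum>j. ennreal (f i x) * ennreal (f j x))" for x
    by (simp add: power2_eq_square)
  then have "(\<integral>\<^sup>+x. (\<Sum>i. ennreal (f i x))^2 \<partial>lborel)
      = (\<integral>\<^sup>+x. (\<Sum>i. \<Sum>j. ennreal (f i x) * ennreal (f j x)) \<partial>lborel)" by simp
  also have "\<dots> = (\<Sum>i. \<integral>\<^sup>+x. (\<Sum>j. ennreal (f i x) * ennreal (f j x)) \<partial>lborel)"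
    by (rule nn_integral_suminf) measurable
  also have "\<dots> = (\<Sum>i. \<Sum>j. \<integral>\<^sup>+x. ennreal (f i x) * ennreal (f j x) \<partial>lborel)"
    by (subst nn_integral_suminf) auto
  finally show ?thesis .
qed

definition S2 :: "real \<Rightarrow> ennreal" where "S2 t = (\<Sum>k. ennreal (tri (bt k) t))"
definition g2 :: "real \<Rightarrow> complex" where "g2 t = complex_of_real (enn2real (S2 t))"
definition G2 :: "real \<Rightarrow> complex" where "G2 \<xi> = complex_of_real (\<Sum>k. ftt (bt k) \<xi>)"

lemma tri_ev_zero:
  assumes "t \<noteq> 0" obtains K where "\<And>k. K \<le> k \<Longrightarrow> tri (bt k) t = 0"
proof -
  obtain K where K: "(1/4::real)^K < \<bar>t\<bar>" using real_arch_pow_inv[of "\<bar>t\<bar>" "1/4"] assms by auto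
  have Z: "tri (bt k) t = 0" if "K \<le> k" for k
  proof -
    have "bt k \<le> (1/4)^k" by (rule bt_le_geom)
    also have "\<dots> \<le> (1/4)^K" using that by (intro power_decreasing) auto
    finally show ?thesis using K bt_pos[of k] by (intro tri_zero) auto
  qed
  show ?thesis using Z by (rule that)
qed

lemma tri_summable: "t \<noteq> 0 \<Longrightarrow> summable (\<lambda>k. tri (bt k) t)"
proof -
  assume "t \<noteq> 0"
  then obtain K where K: "\<And>k. K \<le> k \<Longrightarrow> tri (bt k) t = 0" using tri_ev_zero by blast
  show ?thesis by (rule summable_finite[of "{..<K}"]) (use K in auto)
qed

lemma S2_real: "t \<noteq> 0 \<Longrightarrow> S2 t = ennreal (\<Sum>k. tri (bt k) t)"
  unfolding S2_def by (rule suminf_ennreal2) (auto simp: tri_nonneg tri_summable)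

lemma g2_real: "t \<noteq> 0 \<Longrightarrow> g2 t = complex_of_real (\<Sum>k. tri (bt k) t)"
  unfolding g2_def by (simp add: S2_real suminf_nonneg tri_nonneg tri_summable)

lemma g2_out: "1 \<le> \<bar>t\<bar> \<Longrightarrow> g2 t = 0"
proof -
  assume "1 \<le> \<bar>t\<bar>"
  then have "tri (bt k) t = 0" for k using bt_le1[of k] bt_pos[of k] by (intro tri_zero) auto
  then show ?thesis by (simp add: g2_def S2_def)
qed

lemma g2_meas[measurable]: "g2 \<in> borel_measurable lborel"
  unfolding g2_def S2_def by measurable

lemma Linf_g2: "Linf_norm_on g2 0 1 = top"
  unfolding Linf_norm_on_def Inf_top_conv
proof safe
  fix M assume AE: "AE t in lborel. t \<in> {0..1} \<longrightarrow> ennreal (norm (g2 t)) \<le> M"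
  show "M = top"
  proof (rule ccontr)
    assume "M \<noteq> top"
    then obtain m where m: "M = ennreal m" "0 \<le> m" by (cases M) auto
    obtain K :: nat where K: "2 * m < real K" using reals_Archimedean2 by blast
    define A where "A = {0<..bt K / 2}"
    have big: "ennreal m < ennreal (norm (g2 t))" if "t \<in> A" for t
    proof -
      have t: "0 < t" "t \<le> bt K / 2" using that by (auto simp: A_def)
      have half: "1/2 \<le> tri (bt k) t" if "k \<le> K" for k
      proof -
        have "bt K \<le> bt k" using that by (rule bt_anti)
        then have "t / bt k \<le> 1/2" using t bt_pos[of k] by (simp add: divide_le_eq)
        then have "1/2 \<le> 1 - t / bt k" by simp
        moreover have "tri (bt k) t = max 0 (1 - t/bt k)" using t by (simp add: tri_def)
        ultimately show ?thesis by simp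
      qed
      have "(\<Sum>k<Suc K. (1/2::real)) \<le> (\<Sum>k<Suc K. tri (bt k) t)"
        by (rule sum_mono) (use half in auto)
      also have "\<dots> \<le> (\<Sum>k. tri (bt k) t)"
        by (rule sum_le_suminf) (use t in \<open>auto simp: tri_summable tri_nonneg\<close>)
      finally have "real (Suc K) / 2 \<le> (\<Sum>k. tri (bt k) t)" by simp
      then have "m < (\<Sum>k. tri (bt k) t)" using K by simp
      then show ?thesis using t m by (simp add: g2_real suminf_nonneg tri_nonneg tri_summable ennreal_lessI)
    qed
    have "AE t in lborel. t \<notin> A"
      using AE
    proof eventually_elim
      case (elim t)
      show ?case
      proof
        assume "t \<in> A"
        then have "t \<in> {0..1}" using bt_le1[of K] by (auto simp: A_def)
        then show False using elim big[OF \<open>t \<in> A\<close>] m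
          by (metis ennreal_leI leD)
      qed
    qed
    then have "emeasure lborel A = 0"
      by (subst (asm) AE_iff_measurable[of A]) (auto simp: A_def)
    moreover have "emeasure lborel A = ennreal (bt K / 2)"
      using bt_pos[of K] by (simp add: A_def)
    ultimately show False using bt_pos[of K] by simp
  qed
qed



lemma cis_meas[measurable]: "cis \<in> borel_measurable borel"
  by (rule borel_measurable_continuous_onI) (simp add: cis_conv_exp continuous_intros)

lemma ft_tri_ind:
  assumes "b > 0" "b \<le> N"
  shows "(\<integral>t. indicator {-N..N} t *\<^sub>R (complex_of_real (tri b t) * cis (- (2*pi*\<xi>) * t)) \<partial>lborel)
      = complex_of_real (ftt b \<xi>)"
  using ft_tri[OF assms, of \<xi>] by (simp add: set_lebesgue_integral_def)

lemma int_tri_norm: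
  assumes b: "b > 0" "b \<le> N"
  shows "(\<integral>t. norm (indicator {-N..N} t *\<^sub>R (complex_of_real (tri b t) * cis (e * t))) \<partial>lborel) = b"
proof -
  have "complex_of_real (\<integral>t. norm (indicator {-N..N} t *\<^sub>R (complex_of_real (tri b t) * cis (e * t))) \<partial>lborel)
     = (\<integral>t. indicator {-N..N} t *\<^sub>R (complex_of_real (tri b t) * cis (- (2*pi*0) * t)) \<partial>lborel)"
  proof (subst integral_complex_of_real[symmetric], rule Bochner_Integration.integral_cong)
    fix t
    have "norm (indicator {-N..N} t *\<^sub>R (complex_of_real (tri b t) * cis (e * t))) = indicator {-N..N} t * tri b t"
      by (simp add: norm_mult tri_nonneg)
    then show "complex_of_real (norm (indicator {-N..N} t *\<^sub>R (complex_of_real (tri b t) * cis (e * t))))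
      = indicator {-N..N} t *\<^sub>R (complex_of_real (tri b t) * cis (- (2*pi*0) * t))"
      by (simp add: scaleR_conv_of_real)
  qed simp
  also have "\<dots> = complex_of_real b" using ft_tri_ind[OF b, of 0] by (simp add: ftt_def)
  finally show ?thesis by simp
qed

lemma tri_prod_int:
  assumes "0 < b" "b \<le> c"
  shows "(\<integral>\<^sup>+t. ennreal (tri c t) * ennreal (tri b t) \<partial>lborel) \<le> ennreal (2 * b)"
proof -
  have "(\<integral>\<^sup>+t. ennreal (tri c t) * ennreal (tri b t) \<partial>lborel) \<le> (\<integral>\<^sup>+t. indicator {-b..b} t \<partial>lborel)"
  proof (rule nn_integral_mono)
    fix t
    show "ennreal (tri c t) * ennreal (tri b t) \<le> indicator {-b..b} t"
    proof (cases "t \<in> {-b..b}")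
      case True
      have "tri c t * tri b t \<le> 1 * 1" using assms
        by (intro mult_mono) (auto simp: tri_le1 tri_nonneg)
      then show ?thesis using True by (simp add: ennreal_mult[symmetric] tri_nonneg)
    next
      case False
      then have "tri b t = 0" using assms by (intro tri_zero) auto
      then show ?thesis by simp
    qed
  qed
  also have "\<dots> = ennreal (2 * b)" using assms by simp
  finally show ?thesis .
qed

lemma dt_anti: "k \<le> K \<Longrightarrow> dt K \<le> dt k"
  unfolding dt_def by (rule power_decreasing) auto

lemma min_dt: assumes "i \<le> j" shows "bt j \<le> dt i * dt j"
proof -
  have "bt j = dt j * dt j" by (simp add: bt_dt power2_eq_square)
  also have "\<dots> \<le> dt i * dt j" using dt_anti[OF assms] dt_pos[of j] by (intro mult_right_mono) auto
  finally show ?thesis .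
qed

lemma tri_bt_prod:
  "(\<integral>\<^sup>+t. ennreal (tri (bt i) t) * ennreal (tri (bt j) t) \<partial>lborel) \<le> 2 * ennreal (dt i * dt j)"
proof -
  have "(\<integral>\<^sup>+t. ennreal (tri (bt i) t) * ennreal (tri (bt j) t) \<partial>lborel) \<le> ennreal (2 * (dt i * dt j))"
  proof (cases "i \<le> j")
    case True
    have "(\<integral>\<^sup>+t. ennreal (tri (bt i) t) * ennreal (tri (bt j) t) \<partial>lborel) \<le> ennreal (2 * bt j)"
      using True by (intro tri_prod_int) (auto simp: bt_pos bt_anti)
    also have "\<dots> \<le> ennreal (2 * (dt i * dt j))" using min_dt[OF True] by (intro ennreal_leI) auto
    finally show ?thesis .
  next
    case False
    have "(\<integral>\<^sup>+t. ennreal (tri (bt i) t) * ennreal (tri (bt j) t) \<partial>lborel)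
        = (\<integral>\<^sup>+t. ennreal (tri (bt j) t) * ennreal (tri (bt i) t) \<partial>lborel)" by (simp add: mult.commute)
    also have "\<dots> \<le> ennreal (2 * bt i)"
      using False by (intro tri_prod_int) (auto simp: bt_pos bt_anti)
    also have "\<dots> \<le> ennreal (2 * (dt i * dt j))" using min_dt[of j i] False
      by (intro ennreal_leI) (auto simp: mult.commute)
    finally show ?thesis .
  qed
  also have "\<dots> = 2 * ennreal (dt i * dt j)"
    using dt_pos[of i] dt_pos[of j] by (simp add: ennreal_mult)
  finally show ?thesis .
qed

lemma S2_sq_int: "(\<integral>\<^sup>+t. (S2 t)^2 \<partial>lborel) < top"
proof -
  have "(\<integral>\<^sup>+t. (S2 t)^2 \<partial>lborel) = (\<Sum>i. \<Sum>j. \<integral>\<^sup>+t. ennreal (tri (bt i) t) * ennreal (tri (bt j) t) \<partial>lborel)"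
    unfolding S2_def by (rule sq_suminf_int) measurable
  also have "\<dots> \<le> (\<Sum>i. \<Sum>j. 2 * ennreal (dt i * dt j))"
    by (rule suminf_le[OF _ summableI summableI], rule suminf_le[OF _ summableI summableI], rule tri_bt_prod)
  also have "\<dots> = 2 * (\<Sum>i. \<Sum>j. ennreal (dt i * dt j))"
    by (simp only: ennreal_suminf_cmult)
  also have "\<dots> = 2 * ennreal ((\<Sum>i. dt i)^2)"
    by (subst dsum) (auto intro: less_imp_le dt_pos summable_dt)
  also have "\<dots> = ennreal (2 * (\<Sum>i. dt i)^2)"
    by (rule two_ennreal) simp
  also have "\<dots> < top" by (rule ennreal_less_top)
  finally show ?thesis .
qed

lemma sqint_g2: "square_integrable g2"
  unfolding square_integrable_def
proof (intro conjI)
  show "g2 \<in> borel_measurable lborel" by simp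
  have "(\<integral>\<^sup>+t. ennreal (norm (g2 t))^2 \<partial>lborel) \<le> (\<integral>\<^sup>+t. (S2 t)^2 \<partial>lborel)"
  proof (rule nn_integral_mono)
    fix t
    have "ennreal (norm (g2 t)) \<le> S2 t"
      by (simp add: g2_def ennreal_enn2real_if)
    then show "ennreal (norm (g2 t))^2 \<le> (S2 t)^2"
      by (rule power_mono) simp
  qed
  also have "\<dots> < top" by (rule S2_sq_int)
  finally show "(\<integral>\<^sup>+t. ennreal (norm (g2 t))^2 \<partial>lborel) < \<infinity>" by simp
qed

lemma ftt_summable: "summable (\<lambda>k. ftt (bt k) \<xi>)"
  by (rule summable_comparison_test[OF _ summable_bt]) (auto simp: bt_pos ftt_nonneg ftt_le)

lemma ft_g2:
  assumes N: "1 \<le> N"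
  shows "fourier_trunc g2 N \<xi> = G2 \<xi>"
proof -
  define f where "f k t = indicator {-N..N} t *\<^sub>R (complex_of_real (tri (bt k) t) * cis (- (2*pi*\<xi>) * t))" for k t
  have bN: "bt k \<le> N" for k using bt_le1[of k] N by linarith
  have fi: "integrable lborel (f k)" for k
    unfolding f_def using tri_cis_set_integrable[of "-N" N "bt k" "- (2*pi*\<xi>)"] by (simp add: set_integrable_def)
  have pw: "indicator {-N..N} t *\<^sub>R (g2 t * cis (- 2 * pi * \<xi> * t)) = (\<Sum>k. f k t)" if "t \<noteq> 0" for t
  proof -
    let ?C = "complex_of_real (indicator {-N..N} t) * cis (- (2*pi*\<xi>) * t)"
    have s: "summable (\<lambda>k. complex_of_real (tri (bt k) t))"
      using tri_summable[OF that] by (simp add: summable_of_real)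
    have "(\<Sum>k. f k t) = (\<Sum>k. complex_of_real (tri (bt k) t) * ?C)"
      by (simp add: f_def scaleR_conv_of_real mult_ac)
    also have "\<dots> = (\<Sum>k. complex_of_real (tri (bt k) t)) * ?C"
      by (rule suminf_mult2[OF s, symmetric])
    also have "\<dots> = complex_of_real (\<Sum>k. tri (bt k) t) * ?C"
      by (simp add: suminf_of_real tri_summable[OF that])
    finally show ?thesis using that by (simp add: g2_real scaleR_conv_of_real mult_ac)
  qed
  have "fourier_trunc g2 N \<xi> = (\<integral>t. (\<Sum>k. f k t) \<partial>lborel)"
    unfolding fourier_trunc_def set_lebesgue_integral_def
  proof (rule integral_cong_AE)
    show "(\<lambda>t. \<Sum>k. f k t) \<in> borel_measurable lborel"
      unfolding f_def by measurable
    show "AE t in lborel. indicator {-N..N} t *\<^sub>R (g2 t * cis (- 2 * pi * \<xi> * t)) = (\<Sum>k. f k t)"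
      using AE_lborel_singleton[of 0] by eventually_elim (use pw in auto)
  qed measurable
  also have "\<dots> = (\<Sum>k. integral\<^sup>L lborel (f k))"
  proof (rule integral_suminf)
    show "AE t in lborel. summable (\<lambda>k. norm (f k t))"
      using AE_lborel_singleton[of 0]
    proof eventually_elim
      case (elim t)
      show ?case
        by (rule summable_comparison_test[OF _ tri_summable[OF elim]])
           (auto simp: f_def norm_mult tri_nonneg indicator_def)
    qed
    have nf: "(\<integral>t. norm (f k t) \<partial>lborel) = bt k" for k
      unfolding f_def by (rule int_tri_norm[OF bt_pos bN])
    show "summable (\<lambda>k. \<integral>t. norm (f k t) \<partial>lborel)"
      by (simp add: nf summable_bt)
  qed (rule fi)
  also have "\<dots> = (\<Sum>k. complex_of_real (ftt (bt k) \<xi>))"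
    unfolding f_def by (simp only: ft_tri_ind[OF bt_pos bN])
  also have "\<dots> = G2 \<xi>"
    by (simp add: G2_def suminf_of_real ftt_summable)
  finally show ?thesis .
qed



lemma four_ennreal: "0 \<le> x \<Longrightarrow> 4 * ennreal x = ennreal (4*x)"
  by (simp add: ennreal_mult)


lemma ftt_bt_prod:
  "(\<integral>\<^sup>+\<xi>. ennreal (ftt (bt i) \<xi>) * ennreal (ftt (bt j) \<xi>) \<partial>lborel) \<le> 4 * ennreal (dt i * dt j)"
proof -
  have "(\<integral>\<^sup>+\<xi>. ennreal (ftt (bt i) \<xi>) * ennreal (ftt (bt j) \<xi>) \<partial>lborel) \<le> ennreal (4 * (dt i * dt j))"
  proof (cases "i \<le> j")
    case True
    have "(\<integral>\<^sup>+\<xi>. ennreal (ftt (bt i) \<xi>) * ennreal (ftt (bt j) \<xi>) \<partial>lborel) \<le> ennreal (4 * bt j)"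
      by (rule ftt_prod_int) (auto simp: bt_pos)
    also have "\<dots> \<le> ennreal (4 * (dt i * dt j))" using min_dt[OF True] by (intro ennreal_leI) auto
    finally show ?thesis .
  next
    case False
    have "(\<integral>\<^sup>+\<xi>. ennreal (ftt (bt i) \<xi>) * ennreal (ftt (bt j) \<xi>) \<partial>lborel)
        = (\<integral>\<^sup>+\<xi>. ennreal (ftt (bt j) \<xi>) * ennreal (ftt (bt i) \<xi>) \<partial>lborel)" by (simp add: mult.commute)
    also have "\<dots> \<le> ennreal (4 * bt i)"
      by (rule ftt_prod_int) (auto simp: bt_pos)
    also have "\<dots> \<le> ennreal (4 * (dt i * dt j))" using min_dt[of j i] False
      by (intro ennreal_leI) (auto simp: mult.commute)
    finally show ?thesis .
  qed
  also have "\<dots> = 4 * ennreal (dt i * dt j)"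
    using dt_pos[of i] dt_pos[of j] by (simp add: ennreal_mult)
  finally show ?thesis .
qed

lemma sq_high:
  "(\<integral>\<^sup>+\<xi>. (\<Sum>k. ennreal (ftt (bt (k+m)) \<xi>))^2 \<partial>lborel) \<le> 4 * ennreal ((\<Sum>k. dt (k+m))^2)"
proof -
  have "(\<integral>\<^sup>+\<xi>. (\<Sum>k. ennreal (ftt (bt (k+m)) \<xi>))^2 \<partial>lborel)
      = (\<Sum>i. \<Sum>j. \<integral>\<^sup>+\<xi>. ennreal (ftt (bt (i+m)) \<xi>) * ennreal (ftt (bt (j+m)) \<xi>) \<partial>lborel)"
    by (rule sq_suminf_int) measurable
  also have "\<dots> \<le> (\<Sum>i. \<Sum>j. 4 * ennreal (dt (i+m) * dt (j+m)))"
    by (rule suminf_le[OF _ summableI summableI], rule suminf_le[OF _ summableI summableI], rule ftt_bt_prod)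
  also have "\<dots> = 4 * (\<Sum>i. \<Sum>j. ennreal (dt (i+m) * dt (j+m)))"
    by (simp only: ennreal_suminf_cmult)
  also have "\<dots> = 4 * ennreal ((\<Sum>k. dt (k+m))^2)"
    by (subst dsum[of "\<lambda>k. dt (k+m)"]) (auto intro: less_imp_le dt_pos simp: summable_iff_shift summable_dt)
  finally show ?thesis .
qed

lemma G2_norm: "norm (G2 \<xi>) = (\<Sum>k. ftt (bt k) \<xi>)"
  by (simp add: G2_def suminf_nonneg ftt_nonneg bt_pos ftt_summable)

lemma G2_meas[measurable]: "G2 \<in> borel_measurable lborel"
  unfolding G2_def by measurable

lemma G2_enn: "ennreal (norm (G2 \<xi>)) = (\<Sum>k. ennreal (ftt (bt k) \<xi>))"
  unfolding G2_norm by (rule suminf_ennreal2[symmetric]) (auto simp: ftt_nonneg bt_pos ftt_summable)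

lemma sqint_G2: "square_integrable G2"
  unfolding square_integrable_def
proof (intro conjI)
  show "G2 \<in> borel_measurable lborel" by simp
  have "(\<integral>\<^sup>+\<xi>. ennreal (norm (G2 \<xi>))^2 \<partial>lborel) \<le> 4 * ennreal ((\<Sum>k. dt (k+0))^2)"
    unfolding G2_enn using sq_high[of 0] by simp
  also have "\<dots> = ennreal (4 * (\<Sum>k. dt (k+0))^2)"
    by (rule four_ennreal) simp
  also have "\<dots> < top" by (rule ennreal_less_top)
  finally show "(\<integral>\<^sup>+\<xi>. ennreal (norm (G2 \<xi>))^2 \<partial>lborel) < \<infinity>" by simp
qed

lemma bt_Suc: "bt (Suc K) = bt K ^ 4"
  by (simp add: bt_def power_mult[symmetric] mult.commute)

lemma dt_Suc_sq: "dt (Suc K) ^ 2 = bt K ^ 4"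
  by (simp add: bt_dt[symmetric] bt_Suc)



lemma A_bound:
  assumes "\<xi> \<noteq> 0"
  shows "(\<Sum>k<Suc K. ftt (bt k) \<xi>) \<le> 2 / (\<xi>^2 * bt K)"
proof -
  have "(\<Sum>k<Suc K. ftt (bt k) \<xi>) \<le> (\<Sum>k<Suc K. (1/\<xi>^2) * (1 / bt k))"
    by (rule sum_mono) (use ftt_le2[OF bt_pos assms] in simp)
  also have "\<dots> = (1/\<xi>^2) * (\<Sum>k<Suc K. 1 / bt k)"
    by (rule sum_distrib_left[symmetric])
  also have "\<dots> \<le> (1/\<xi>^2) * (2 / bt K)"
    by (rule mult_left_mono[OF inv_bt_sum]) simp
  finally show ?thesis by simp
qed

lemma tail_G2:
  fixes K :: nat
  defines "L \<equiv> 1 / bt K ^ 2"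
  shows "(\<integral>\<^sup>+\<xi>. indicator {\<xi>. L \<le> \<bar>\<xi>\<bar>} \<xi> * ennreal (norm (G2 \<xi>))^2 \<partial>lborel) \<le> ennreal (38 * bt K ^ 4)"
proof -
  have bK: "0 < bt K" by (rule bt_pos)
  have Lpos: "L > 0" using bK by (simp add: L_def)
  define A where "A \<xi> = (\<Sum>k<Suc K. ftt (bt k) \<xi>)" for \<xi>
  define B where "B \<xi> = (\<Sum>k. ftt (bt (k + Suc K)) \<xi>)" for \<xi>
  define H where "H \<xi> = (\<Sum>k. ennreal (ftt (bt (k + Suc K)) \<xi>))" for \<xi>
  have sB: "summable (\<lambda>k. ftt (bt (k + Suc K)) \<xi>)" for \<xi>
    using ftt_summable[of \<xi>] summable_iff_shift[of "\<lambda>k. ftt (bt k) \<xi>" "Suc K"] by simp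
  have split: "norm (G2 \<xi>) = B \<xi> + A \<xi>" for \<xi>
    unfolding G2_norm A_def B_def by (rule suminf_split_initial_segment[OF ftt_summable])
  have Bnn: "0 \<le> B \<xi>" for \<xi>
    unfolding B_def by (rule suminf_nonneg[OF sB]) (simp add: ftt_nonneg bt_pos)
  have Ann: "0 \<le> A \<xi>" for \<xi>
    unfolding A_def by (rule sum_nonneg) (simp add: ftt_nonneg bt_pos)
  have HB: "H \<xi> = ennreal (B \<xi>)" for \<xi>
    unfolding H_def B_def by (rule suminf_ennreal2[OF _ sB]) (simp add: ftt_nonneg bt_pos)
  have pw: "indicator {\<xi>. L \<le> \<bar>\<xi>\<bar>} \<xi> * ennreal (norm (G2 \<xi>))^2
      \<le> ennreal (8 / bt K ^ 2) * (indicator {\<xi>. L \<le> \<bar>\<xi>\<bar>} \<xi> * ennreal (1/\<xi>^4)) + 2 * (H \<xi>)^2" for \<xi>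
  proof (cases "L \<le> \<bar>\<xi>\<bar>")
    case True
    then have x0: "\<xi> \<noteq> 0" using Lpos by auto
    have Ab: "A \<xi> \<le> 2 / (\<xi>^2 * bt K)" unfolding A_def by (rule A_bound[OF x0])
    have "A \<xi> ^ 2 \<le> (2 / (\<xi>^2 * bt K))^2"
      by (rule power_mono[OF Ab Ann])
    also have "\<dots> = 4 / bt K ^ 2 * (1 / \<xi>^4)"
      by (simp add: power_divide power_mult_distrib field_simps eval_nat_numeral)
    finally have A2: "A \<xi> ^ 2 \<le> 4 / bt K ^ 2 * (1 / \<xi>^4)" .
    have "(B \<xi> + A \<xi>)^2 \<le> 2 * B \<xi>^2 + 2 * A \<xi>^2"
    proof -
      have "0 \<le> (B \<xi> - A \<xi>)^2" by simp
      then show ?thesis by (simp add: power2_sum power2_diff)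
    qed
    also have "\<dots> \<le> 8 / bt K ^ 2 * (1 / \<xi>^4) + 2 * B \<xi>^2"
      using A2 by simp
    finally have r: "(B \<xi> + A \<xi>)^2 \<le> 8 / bt K ^ 2 * (1 / \<xi>^4) + 2 * B \<xi>^2" .
    have "ennreal (norm (G2 \<xi>))^2 = ennreal (norm (G2 \<xi>)^2)"
      by (rule ennreal_power) simp
    also have "\<dots> = ennreal ((B \<xi> + A \<xi>)^2)"
      by (simp only: split)
    also have "\<dots> \<le> ennreal (8 / bt K ^ 2 * (1 / \<xi>^4) + 2 * B \<xi>^2)"
      by (rule ennreal_leI[OF r])
    also have "\<dots> = ennreal (8 / bt K ^ 2 * (1 / \<xi>^4)) + ennreal (2 * B \<xi>^2)"
      by (rule ennreal_plus) (use bK in auto)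
    also have "ennreal (8 / bt K ^ 2 * (1 / \<xi>^4)) = ennreal (8 / bt K ^ 2) * ennreal (1/\<xi>^4)"
      by (rule ennreal_mult) (use bK in auto)
    also have "ennreal (2 * B \<xi>^2) = 2 * ennreal (B \<xi>^2)"
      by (rule two_ennreal[symmetric]) simp
    also have "ennreal (B \<xi>^2) = (H \<xi>)^2"
      unfolding HB by (rule ennreal_power[symmetric]) (rule Bnn)
    finally show ?thesis using True by simp
  next
    case False
    then show ?thesis by simp
  qed
  have "(\<integral>\<^sup>+\<xi>. indicator {\<xi>. L \<le> \<bar>\<xi>\<bar>} \<xi> * ennreal (norm (G2 \<xi>))^2 \<partial>lborel)
     \<le> (\<integral>\<^sup>+\<xi>. ennreal (8 / bt K ^ 2) * (indicator {\<xi>. L \<le> \<bar>\<xi>\<bar>} \<xi> * ennreal (1/\<xi>^4)) + 2 * (H \<xi>)^2 \<partial>lborel)"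
    by (rule nn_integral_mono) (rule pw)
  also have "\<dots> = ennreal (8 / bt K ^ 2) * (\<integral>\<^sup>+\<xi>. indicator {\<xi>. L \<le> \<bar>\<xi>\<bar>} \<xi> * ennreal (1/\<xi>^4) \<partial>lborel)
        + 2 * (\<integral>\<^sup>+\<xi>. (H \<xi>)^2 \<partial>lborel)"
    unfolding H_def by (subst nn_integral_add) (auto simp: nn_integral_cmult)
  also have "\<dots> \<le> ennreal (8 / bt K ^ 2) * ennreal (2 / (3 * L^3)) + 2 * (4 * ennreal ((\<Sum>k. dt (k + Suc K))^2))"
    unfolding H_def tail_4[OF Lpos]
    by (intro add_mono mult_left_mono sq_high order_refl) auto
  also have "ennreal (8 / bt K ^ 2) * ennreal (2 / (3 * L^3)) = ennreal (8 / bt K ^ 2 * (2 / (3 * L^3)))"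
    by (rule ennreal_mult[symmetric]) (use bK Lpos in auto)
  also have "4 * ennreal ((\<Sum>k. dt (k + Suc K))^2) = ennreal (4 * (\<Sum>k. dt (k + Suc K))^2)"
    by (rule four_ennreal) simp
  also have "2 * ennreal (4 * (\<Sum>k. dt (k + Suc K))^2) = ennreal (2 * (4 * (\<Sum>k. dt (k + Suc K))^2))"
    by (rule two_ennreal) simp
  also have "ennreal (8 / bt K ^ 2 * (2 / (3 * L^3))) + ennreal (2 * (4 * (\<Sum>k. dt (k + Suc K))^2))
      = ennreal (8 / bt K ^ 2 * (2 / (3 * L^3)) + 2 * (4 * (\<Sum>k. dt (k + Suc K))^2))"
    by (rule ennreal_plus[symmetric]) (use bK Lpos in auto)
  also have "8 / bt K ^ 2 * (2 / (3 * L^3)) + 2 * (4 * (\<Sum>k. dt (k + Suc K))^2)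
      = 16 / (3 * bt K^2 * L^3) + 8 * (\<Sum>k. dt (k + Suc K))^2"
    by (simp add: field_simps)
  also have "\<dots> \<le> ennreal (38 * bt K ^ 4)"
  proof (rule ennreal_leI)
    have "16 / (3 * bt K^2 * L^3) = 16/3 * bt K ^ 4"
      using bK by (simp add: L_def power_divide field_simps eval_nat_numeral)
    moreover have "(\<Sum>k. dt (k + Suc K))^2 \<le> (2 * dt (Suc K))^2"
    proof (rule power_mono[OF dt_tail])
      have "summable (\<lambda>k. dt (k + Suc K))" using summable_iff_shift[of dt "Suc K"] summable_dt by blast
      then show "0 \<le> (\<Sum>k. dt (k + Suc K))" by (rule suminf_nonneg) (rule less_imp_le[OF dt_pos])
    qed
    moreover have "(2 * dt (Suc K))^2 = 4 * bt K ^ 4"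
      using dt_Suc_sq[of K] by (simp add: power_mult_distrib)
    ultimately show "16 / (3 * bt K^2 * L^3) + 8 * (\<Sum>k. dt (k + Suc K))^2 \<le> 38 * bt K ^ 4"
      using bK zero_le_power[of "bt K" 4] by linarith
  qed
  finally show ?thesis .
qed



lemma count_ge_point: "f a \<le> (\<integral>\<^sup>+x. f x \<partial>count_space UNIV)"
proof -
  have "(\<integral>\<^sup>+x. f x * indicator {a} x \<partial>count_space UNIV) = f a"
    by (subst nn_integral_indicator_finite) auto
  moreover have "(\<integral>\<^sup>+x. f x * indicator {a} x \<partial>count_space UNIV) \<le> (\<integral>\<^sup>+x. f x \<partial>count_space UNIV)"
    by (intro nn_integral_mono) (simp add: indicator_def)
  ultimately show ?thesis by simp
qed

lemma L2_g2: "is_L2_fourier g2 G2"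
  unfolding is_L2_fourier_def
proof (intro conjI)
  show "square_integrable G2" by (rule sqint_G2)
  show "((\<lambda>N. \<integral>\<^sup>+ \<xi>. ennreal (norm (G2 \<xi> - fourier_trunc g2 N \<xi>)) ^ 2 \<partial>lborel) \<longlongrightarrow> 0) at_top"
  proof (rule tendsto_eventually)
    show "\<forall>\<^sub>F N in at_top. (\<integral>\<^sup>+ \<xi>. ennreal (norm (G2 \<xi> - fourier_trunc g2 N \<xi>)) ^ 2 \<partial>lborel) = 0"
      unfolding eventually_at_top_linorder
      by (rule exI[of _ 1]) (simp add: ft_g2)
  qed
qed

lemma css_g2: "cond_star_star g2 G2"
  unfolding cond_star_star_def
proof (rule disjI1)
  have "Linf_norm_on g2 (real_of_int 0) (real_of_int 0 + 1)
     \<le> (\<integral>\<^sup>+ n. Linf_norm_on g2 (real_of_int n) (real_of_int n + 1) \<partial>count_space (UNIV :: int set))"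
    by (rule count_ge_point[of "\<lambda>n. Linf_norm_on g2 (real_of_int n) (real_of_int n + 1)"])
  then show "(\<integral>\<^sup>+ n. Linf_norm_on g2 (real_of_int n) (real_of_int n + 1) \<partial>count_space (UNIV :: int set)) = \<infinity>"
    using Linf_g2 by (simp add: top_unique)
qed

lemma ncs_g2: "\<not> cond_star g2 G2"
proof
  assume "cond_star g2 G2"
  then obtain C where C: "C > 0" and H: "\<And>R L. R \<ge> 1 \<Longrightarrow> L \<ge> 1 \<Longrightarrow>
     (\<integral>\<^sup>+ t. indicator {t. \<bar>t\<bar> \<ge> R} t * ennreal (norm (g2 t)) ^ 2 \<partial>lborel)
     + (\<integral>\<^sup>+ \<xi>. indicator {\<xi>. \<bar>\<xi>\<bar> \<ge> L} \<xi> * ennreal (norm (G2 \<xi>)) ^ 2 \<partial>lborel)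
     \<ge> ennreal (C / (R * L))"
    unfolding cond_star_def by blast
  obtain K where K: "(1/4::real)^K < C / 38" using real_arch_pow_inv[of "C/38" "1/4"] C by auto
  define L where "L = 1 / bt K ^ 2"
  have bK: "0 < bt K" "bt K \<le> 1" by (rule bt_pos, rule bt_le1)
  have L1: "1 \<le> L" using bK by (simp add: L_def power_le_one)
  have g0: "(\<integral>\<^sup>+ t. indicator {t. \<bar>t\<bar> \<ge> 1} t * ennreal (norm (g2 t)) ^ 2 \<partial>lborel) = 0"
  proof -
    have pw0: "(\<lambda>t. indicator {t. \<bar>t\<bar> \<ge> 1} t * ennreal (norm (g2 t)) ^ 2) = (\<lambda>t. 0::ennreal)"
      by (rule ext) (simp add: indicator_def g2_out)
    show ?thesis unfolding pw0 by simp
  qed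
  have "(\<integral>\<^sup>+ \<xi>. indicator {\<xi>. \<bar>\<xi>\<bar> \<ge> L} \<xi> * ennreal (norm (G2 \<xi>)) ^ 2 \<partial>lborel) \<le> ennreal (38 * bt K ^ 4)"
    using tail_G2[of K] by (simp add: L_def)
  also have "38 * bt K ^ 4 < C / (1 * L)"
  proof -
    have "bt K ^ 2 \<le> bt K" using bK by (simp add: power2_eq_square mult_left_le)
    also have "\<dots> \<le> (1/4)^K" by (rule bt_le_geom)
    finally have "38 * bt K ^ 2 < C" using K by simp
    then have "38 * bt K ^ 2 * bt K ^ 2 < C * bt K ^ 2" using bK by simp
    then show ?thesis using bK by (simp add: L_def power_mult_distrib eval_nat_numeral field_simps)
  qed
  then have "ennreal (38 * bt K ^ 4) < ennreal (C / (1 * L))"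
    using C L1 by (intro ennreal_lessI) auto
  finally have "(\<integral>\<^sup>+ \<xi>. indicator {\<xi>. \<bar>\<xi>\<bar> \<ge> L} \<xi> * ennreal (norm (G2 \<xi>)) ^ 2 \<partial>lborel) < ennreal (C / (1 * L))" .
  moreover have "ennreal (C / (1 * L)) \<le> 0 + (\<integral>\<^sup>+ \<xi>. indicator {\<xi>. \<bar>\<xi>\<bar> \<ge> L} \<xi> * ennreal (norm (G2 \<xi>)) ^ 2 \<partial>lborel)"
    using H[of 1 L] L1 g0 by simp
  ultimately show False by simp
qed

lemma part2: "\<exists>g G. square_integrable g \<and> is_L2_fourier g G \<and> cond_star_star g G \<and> \<not> cond_star g G"
  using sqint_g2 L2_g2 css_g2 ncs_g2 by blast



definition cc :: "nat \<Rightarrow> real" where "cc k = (1/2)^k"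
definition nn :: "nat \<Rightarrow> real" where "nn k = 4^k"
definition h1 :: "real \<Rightarrow> complex" where
  "h1 t = (\<Sum>k. complex_of_real (cc k) * cis (2*pi*nn k*t))"
definition g1 :: "real \<Rightarrow> complex" where "g1 t = complex_of_real (tri 1 t) * h1 t"
definition G1 :: "real \<Rightarrow> complex" where
  "G1 \<xi> = complex_of_real (\<Sum>k. cc k * ftt 1 (\<xi> - nn k))"

lemma cc_pos: "0 < cc k" by (simp add: cc_def)
lemma summable_cc: "summable cc" unfolding cc_def by (rule summable_geometric) simp
lemma suminf_cc: "(\<Sum>k. cc k) = 2" unfolding cc_def using suminf_geometric[of "1/2::real"] by simp

lemma h1_summable_norm: "summable (\<lambda>k. norm (complex_of_real (cc k) * cis (2*pi*nn k*t)))"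
  by (simp add: norm_mult summable_cc less_imp_le[OF cc_pos] abs_of_pos[OF cc_pos])

lemma h1_summable: "summable (\<lambda>k. complex_of_real (cc k) * cis (2*pi*nn k*t))"
  by (rule summable_norm_cancel[OF h1_summable_norm])

lemma h1_bound: "norm (h1 t) \<le> 2"
proof -
  have "norm (h1 t) \<le> (\<Sum>k. norm (complex_of_real (cc k) * cis (2*pi*nn k*t)))"
    unfolding h1_def by (rule summable_norm[OF h1_summable_norm])
  also have "\<dots> = (\<Sum>k. cc k)"
    by (simp add: norm_mult abs_of_pos[OF cc_pos])
  finally show ?thesis by (simp add: suminf_cc)
qed

lemma g1_meas[measurable]: "g1 \<in> borel_measurable lborel"
  unfolding g1_def h1_def by measurable

lemma g1_out: "1 \<le> \<bar>t\<bar> \<Longrightarrow> g1 t = 0"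
  by (simp add: g1_def tri_zero)

lemma g1_bound: "norm (g1 t) \<le> 2"
proof -
  have "norm (g1 t) = tri 1 t * norm (h1 t)" by (simp add: g1_def norm_mult tri_nonneg)
  also have "\<dots> \<le> 1 * 2" by (intro mult_mono h1_bound) (auto simp: tri_le1 tri_nonneg)
  finally show ?thesis by simp
qed

lemma sqint_g1: "square_integrable g1"
  unfolding square_integrable_def
proof (intro conjI)
  show "g1 \<in> borel_measurable lborel" by simp
  have pw: "ennreal (norm (g1 t))^2 \<le> ennreal 4 * indicator {-1..1} t" for t
    proof (cases "t \<in> {-1..1}")
      case True
      have "norm (g1 t)^2 \<le> 2^2" by (rule power_mono[OF g1_bound]) simp
      then have "ennreal (norm (g1 t)^2) \<le> ennreal 4" by (intro ennreal_leI) simp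
      then show ?thesis using True by (simp add: ennreal_power)
    next
      case False
      then have "g1 t = 0" by (intro g1_out) auto
      then show ?thesis by simp
    qed
  have "(\<integral>\<^sup>+t. ennreal (norm (g1 t))^2 \<partial>lborel) \<le> (\<integral>\<^sup>+t. ennreal 4 * indicator {-1..1::real} t \<partial>lborel)"
    by (rule nn_integral_mono) (rule pw)
  also have "\<dots> = ennreal 4 * ennreal 2" by (subst nn_integral_cmult_indicator) auto
  also have "\<dots> < \<infinity>" by (simp add: ennreal_mult[symmetric] del: ennreal_numeral)
  finally show "(\<integral>\<^sup>+t. ennreal (norm (g1 t))^2 \<partial>lborel) < \<infinity>" .
qed

lemma ftt1_summable: "summable (\<lambda>k. cc k * ftt 1 (\<xi> - nn k))"
  by (rule summable_comparison_test[OF _ summable_cc])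
     (auto simp: abs_mult ftt_nonneg abs_of_pos[OF cc_pos] intro!: mult_left_le less_imp_le[OF cc_pos]
       order_trans[OF ftt_le[of 1]])

lemma ft_g1:
  assumes N: "1 \<le> N"
  shows "fourier_trunc g1 N \<xi> = G1 \<xi>"
proof -
  define X where "X k t = indicator {-N..N} t *\<^sub>R (complex_of_real (tri 1 t) * cis (- (2*pi*(\<xi> - nn k)) * t))" for k t
  define f where "f k t = complex_of_real (cc k) * X k t" for k t
  have Xi: "integrable lborel (X k)" for k
    unfolding X_def using tri_cis_set_integrable[of "-N" N 1 "- (2*pi*(\<xi> - nn k))"] by (simp add: set_integrable_def)
  have fi: "integrable lborel (f k)" for k unfolding f_def using Xi by simp
  have pw: "indicator {-N..N} t *\<^sub>R (g1 t * cis (- 2 * pi * \<xi> * t)) = (\<Sum>k. f k t)" for t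
  proof -
    let ?C = "complex_of_real (indicator {-N..N} t) * complex_of_real (tri 1 t) * cis (- 2 * pi * \<xi> * t)"
    have e: "f k t = complex_of_real (cc k) * cis (2*pi*nn k*t) * ?C" for k
    proof -
      have cm: "cis (- (2*pi*(\<xi> - nn k)) * t) = cis (2*pi*nn k*t) * cis (- 2 * pi * \<xi> * t)"
        by (simp add: cis_mult algebra_simps)
      show ?thesis unfolding f_def X_def cm by (simp add: scaleR_conv_of_real mult_ac)
    qed
    have "(\<Sum>k. f k t) = (\<Sum>k. complex_of_real (cc k) * cis (2*pi*nn k*t) * ?C)" by (simp only: e)
    also have "\<dots> = h1 t * ?C" unfolding h1_def by (rule suminf_mult2[OF h1_summable, symmetric])
    finally show ?thesis by (simp add: g1_def scaleR_conv_of_real mult_ac)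
  qed
  have "fourier_trunc g1 N \<xi> = (\<integral>t. (\<Sum>k. f k t) \<partial>lborel)"
    unfolding fourier_trunc_def set_lebesgue_integral_def pw by simp
  also have "\<dots> = (\<Sum>k. integral\<^sup>L lborel (f k))"
  proof (rule integral_suminf)
    have nX: "norm (X k t) \<le> 1" for k t
      by (simp add: X_def norm_mult tri_nonneg tri_le1 indicator_def)
    show "AE t in lborel. summable (\<lambda>k. norm (f k t))"
    proof (rule AE_I2)
      fix t
      have nfk: "norm (norm (f k t)) \<le> cc k" for k
        using nX[of k t] cc_pos[of k] by (simp add: f_def norm_mult mult_left_le)
      show "summable (\<lambda>k. norm (f k t))"
        by (rule summable_comparison_test[OF _ summable_cc]) (use nfk in blast)
    qed
    have nf: "(\<integral>t. norm (f k t) \<partial>lborel) = cc k" for k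
    proof -
      have "(\<integral>t. norm (f k t) \<partial>lborel) = (\<integral>t. cc k * norm (X k t) \<partial>lborel)"
        by (simp add: f_def norm_mult abs_of_pos[OF cc_pos])
      also have "\<dots> = cc k * (\<integral>t. norm (X k t) \<partial>lborel)" by (rule integral_mult_right_zero)
      also have "(\<integral>t. norm (X k t) \<partial>lborel) = 1"
        unfolding X_def by (rule int_tri_norm) (use N in auto)
      finally show ?thesis by simp
    qed
    show "summable (\<lambda>k. \<integral>t. norm (f k t) \<partial>lborel)"
      by (simp only: nf summable_cc)
  qed (rule fi)
  also have "\<dots> = (\<Sum>k. complex_of_real (cc k) * complex_of_real (ftt 1 (\<xi> - nn k)))"
  proof -
    have "integral\<^sup>L lborel (f k) = complex_of_real (cc k) * complex_of_real (ftt 1 (\<xi> - nn k))" for k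
    proof -
      have "integral\<^sup>L lborel (f k) = complex_of_real (cc k) * integral\<^sup>L lborel (X k)"
        unfolding f_def by (rule integral_mult_right_zero)
      also have "integral\<^sup>L lborel (X k) = complex_of_real (ftt 1 (\<xi> - nn k))"
        unfolding X_def by (rule ft_tri_ind) (use N in auto)
      finally show ?thesis .
    qed
    then show ?thesis by simp
  qed
  also have "\<dots> = G1 \<xi>"
    unfolding G1_def of_real_mult[symmetric] by (rule suminf_of_real[OF ftt1_summable, symmetric])
  finally show ?thesis .
qed



lemma ftt1_le1: "ftt 1 x \<le> 1" using ftt_le[of 1 x] by simp
lemma ftt1_nn: "0 \<le> ftt 1 x" using ftt_nonneg[of 1 x] by simp

lemma G1_norm: "norm (G1 \<xi>) = (\<Sum>k. cc k * ftt 1 (\<xi> - nn k))"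
proof -
  have "0 \<le> (\<Sum>k. cc k * ftt 1 (\<xi> - nn k))"
    by (rule suminf_nonneg[OF ftt1_summable]) (simp add: less_imp_le[OF cc_pos] ftt1_nn)
  then show ?thesis by (simp add: G1_def)
qed

lemma G1_le2: "norm (G1 \<xi>) \<le> 2"
proof -
  have "(\<Sum>k. cc k * ftt 1 (\<xi> - nn k)) \<le> (\<Sum>k. cc k)"
    by (rule suminf_le[OF _ ftt1_summable summable_cc])
       (simp add: mult_left_le[OF ftt1_le1 less_imp_le[OF cc_pos]])
  then show ?thesis by (simp add: G1_norm suminf_cc)
qed

lemma G1_meas[measurable]: "G1 \<in> borel_measurable lborel"
  unfolding G1_def by measurable

lemma sqint_G1: "square_integrable G1"
  unfolding square_integrable_def
proof (intro conjI)
  show "G1 \<in> borel_measurable lborel" by simp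
  have enn: "ennreal (norm (G1 \<xi>)) = (\<Sum>k. ennreal (cc k * ftt 1 (\<xi> - nn k)))" for \<xi>
    unfolding G1_norm by (rule suminf_ennreal2[symmetric])
      (auto simp: less_imp_le[OF cc_pos] ftt1_nn ftt1_summable)
  have pw: "ennreal (norm (G1 \<xi>))^2 \<le> 2 * (\<Sum>k. ennreal (cc k * ftt 1 (\<xi> - nn k)))" for \<xi>
  proof -
    have "norm (G1 \<xi>) ^ 2 \<le> 2 * norm (G1 \<xi>)"
      using G1_le2[of \<xi>] by (simp add: power2_eq_square mult_right_mono)
    then have "ennreal (norm (G1 \<xi>) ^ 2) \<le> ennreal (2 * norm (G1 \<xi>))" by (rule ennreal_leI)
    also have "\<dots> = 2 * ennreal (norm (G1 \<xi>))" by (rule two_ennreal[symmetric]) simp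
    finally show ?thesis unfolding enn[symmetric] by (simp add: ennreal_power)
  qed
  have "(\<integral>\<^sup>+\<xi>. ennreal (norm (G1 \<xi>))^2 \<partial>lborel) \<le> (\<integral>\<^sup>+\<xi>. 2 * (\<Sum>k. ennreal (cc k * ftt 1 (\<xi> - nn k))) \<partial>lborel)"
    by (rule nn_integral_mono) (rule pw)
  also have "\<dots> = 2 * (\<integral>\<^sup>+\<xi>. (\<Sum>k. ennreal (cc k * ftt 1 (\<xi> - nn k))) \<partial>lborel)"
    by (rule nn_integral_cmult) measurable
  also have "(\<integral>\<^sup>+\<xi>. (\<Sum>k. ennreal (cc k * ftt 1 (\<xi> - nn k))) \<partial>lborel)
      = (\<Sum>k. \<integral>\<^sup>+\<xi>. ennreal (cc k * ftt 1 (\<xi> - nn k)) \<partial>lborel)"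
    by (rule nn_integral_suminf) measurable
  also have "\<dots> \<le> (\<Sum>k. ennreal (cc k) * 4)"
  proof (rule suminf_le[OF _ summableI summableI])
    fix k
    have "(\<integral>\<^sup>+\<xi>. ennreal (cc k * ftt 1 (\<xi> - nn k)) \<partial>lborel)
        = (\<integral>\<^sup>+\<xi>. ennreal (cc k) * ennreal (ftt 1 (\<xi> - nn k)) \<partial>lborel)"
      by (rule nn_integral_cong, rule ennreal_mult) (auto simp: less_imp_le[OF cc_pos] ftt1_nn)
    also have "\<dots> = ennreal (cc k) * (\<integral>\<^sup>+\<xi>. ennreal (ftt 1 (\<xi> - nn k)) \<partial>lborel)"
      by (rule nn_integral_cmult) measurable
    also have "\<dots> \<le> ennreal (cc k) * 4"
      by (rule mult_left_mono[OF ftt_int_shift]) auto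
    finally show "(\<integral>\<^sup>+\<xi>. ennreal (cc k * ftt 1 (\<xi> - nn k)) \<partial>lborel) \<le> ennreal (cc k) * 4" .
  qed
  also have "\<dots> = (\<Sum>k. ennreal (cc k)) * 4" by (rule ennreal_suminf_multc)
  also have "(\<Sum>k. ennreal (cc k)) = ennreal 2"
    unfolding suminf_cc[symmetric] by (rule suminf_ennreal2) (auto simp: less_imp_le[OF cc_pos] summable_cc)
  finally have "(\<integral>\<^sup>+\<xi>. ennreal (norm (G1 \<xi>))^2 \<partial>lborel) \<le> 2 * (ennreal 2 * 4)"
    by (simp add: mult_left_mono)
  also have "\<dots> < \<infinity>"
  proof -
    have "ennreal 2 * 4 = ennreal 8" using ennreal_mult[of 2 4] by simp
    moreover have "2 * ennreal 8 = ennreal 16" using two_ennreal[of 8] by simp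
    ultimately show ?thesis by simp
  qed
  finally show "(\<integral>\<^sup>+\<xi>. ennreal (norm (G1 \<xi>))^2 \<partial>lborel) < \<infinity>" .
qed

lemma L2_g1: "is_L2_fourier g1 G1"
  unfolding is_L2_fourier_def
proof (intro conjI)
  show "square_integrable G1" by (rule sqint_G1)
  show "((\<lambda>N. \<integral>\<^sup>+ \<xi>. ennreal (norm (G1 \<xi> - fourier_trunc g1 N \<xi>)) ^ 2 \<partial>lborel) \<longlongrightarrow> 0) at_top"
  proof (rule tendsto_eventually)
    show "\<forall>\<^sub>F N in at_top. (\<integral>\<^sup>+ \<xi>. ennreal (norm (G1 \<xi> - fourier_trunc g1 N \<xi>)) ^ 2 \<partial>lborel) = 0"
      unfolding eventually_at_top_linorder
      by (rule exI[of _ 1]) (simp add: ft_g1)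
  qed
qed

lemma cs_g1: "cond_star g1 G1"
  unfolding cond_star_def
proof (intro exI[of _ "1/1024"] conjI allI impI)
  fix R L :: real assume R: "1 \<le> R" and L: "1 \<le> L"
  have ex: "\<exists>k. L \<le> nn k"
  proof -
    obtain n where "L < 4^n" using real_arch_pow[of 4 L] by auto
    then show ?thesis by (auto simp: nn_def intro!: exI[of _ n])
  qed
  define k where "k = (LEAST k. L \<le> nn k)"
  have Lk: "L \<le> nn k" unfolding k_def by (rule LeastI_ex[OF ex])
  have k4: "nn k < 4 * L"
  proof (cases k)
    case 0 then show ?thesis using L by (simp add: nn_def)
  next
    case (Suc j)
    have "j < k" using Suc by simp
    then have "\<not> L \<le> nn j" unfolding k_def by (rule not_less_Least)
    then show ?thesis using Suc by (simp add: nn_def)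
  qed
  have cck: "cc k ^ 2 = 1 / nn k"
  proof -
    have e: "(2::real)^k * 2^k = 4^k" by (simp add: power_mult_distrib[symmetric])
    show ?thesis by (simp add: cc_def nn_def power_divide power2_eq_square e)
  qed
  define W where "W = {nn k + 1/4 .. nn k + 1/2}"
  have low: "ennreal (1 / (256 * L)) * indicator W \<xi>
      \<le> indicator {\<xi>. \<bar>\<xi>\<bar> \<ge> L} \<xi> * ennreal (norm (G1 \<xi>)) ^ 2" for \<xi>
  proof (cases "\<xi> \<in> W")
    case True
    then have \<xi>L: "L \<le> \<bar>\<xi>\<bar>" using Lk by (auto simp: W_def)
    have "cc k * ftt 1 (\<xi> - nn k) \<le> (\<Sum>k. cc k * ftt 1 (\<xi> - nn k))"
      using sum_le_suminf[OF ftt1_summable, of "{k}"] by (simp add: less_imp_le[OF cc_pos] ftt1_nn)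
    moreover have "cc k * (1/8) \<le> cc k * ftt 1 (\<xi> - nn k)"
      using True ftt_lower[of "\<xi> - nn k"] by (intro mult_left_mono) (auto simp: W_def less_imp_le[OF cc_pos])
    ultimately have g: "cc k / 8 \<le> norm (G1 \<xi>)" by (simp add: G1_norm)
    have "1 / (256 * L) \<le> (cc k / 8)^2"
    proof -
      have nkp: "0 < nn k" by (simp add: nn_def)
      have "1 / (256 * L) \<le> 1 / (64 * nn k)" using k4 L nkp by (simp add: field_simps)
      also have "\<dots> = (cc k / 8)^2" by (simp add: power_divide cck)
      finally show ?thesis .
    qed
    also have "\<dots> \<le> norm (G1 \<xi>) ^ 2" by (rule power_mono[OF g]) (simp add: less_imp_le[OF cc_pos])
    finally have "ennreal (1 / (256 * L)) \<le> ennreal (norm (G1 \<xi>) ^ 2)" by (rule ennreal_leI)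
    then show ?thesis using True \<xi>L by (simp add: ennreal_power)
  next
    case False then show ?thesis by simp
  qed
  have "ennreal (1/1024 / (R * L)) \<le> ennreal (1 / (256 * L)) * ennreal (1/4)"
  proof -
    have "1/1024 / (R * L) \<le> 1 / (256 * L) * (1/4)"
      using R L by (simp add: field_simps)
    moreover have "ennreal (1 / (256 * L) * (1/4)) = ennreal (1 / (256 * L)) * ennreal (1/4)"
      by (rule ennreal_mult) (use L in auto)
    ultimately show ?thesis by (metis ennreal_leI)
  qed
  also have "\<dots> = (\<integral>\<^sup>+\<xi>. ennreal (1 / (256 * L)) * indicator W \<xi> \<partial>lborel)"
    by (subst nn_integral_cmult_indicator) (auto simp: W_def)
  also have "\<dots> \<le> (\<integral>\<^sup>+ \<xi>. indicator {\<xi>. \<bar>\<xi>\<bar> \<ge> L} \<xi> * ennreal (norm (G1 \<xi>)) ^ 2 \<partial>lborel)"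
    by (rule nn_integral_mono) (rule low)
  also have "\<dots> \<le> (\<integral>\<^sup>+ t. indicator {t. \<bar>t\<bar> \<ge> R} t * ennreal (norm (g1 t)) ^ 2 \<partial>lborel)
     + (\<integral>\<^sup>+ \<xi>. indicator {\<xi>. \<bar>\<xi>\<bar> \<ge> L} \<xi> * ennreal (norm (G1 \<xi>)) ^ 2 \<partial>lborel)"
    by (rule add_increasing) auto
  finally show "(\<integral>\<^sup>+ t. indicator {t. \<bar>t\<bar> \<ge> R} t * ennreal (norm (g1 t)) ^ 2 \<partial>lborel)
     + (\<integral>\<^sup>+ \<xi>. indicator {\<xi>. \<bar>\<xi>\<bar> \<ge> L} \<xi> * ennreal (norm (G1 \<xi>)) ^ 2 \<partial>lborel)
     \<ge> ennreal (1/1024 / (R * L))" .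
qed simp



lemma Linf_le:
  assumes "\<And>t. a \<le> t \<Longrightarrow> t \<le> b \<Longrightarrow> norm (f t) \<le> M"
  shows "Linf_norm_on f a b \<le> ennreal M"
  unfolding Linf_norm_on_def
  by (rule Inf_lower) (auto intro!: AE_I2 ennreal_leI assms)

lemma ncs_g1_part: "(\<integral>\<^sup>+ n. Linf_norm_on g1 (real_of_int n) (real_of_int n + 1) \<partial>count_space (UNIV :: int set)) < \<infinity>"
proof -
  have gi: "Linf_norm_on g1 (real_of_int n) (real_of_int n + 1) \<le> ennreal 2 * indicator {-1,0} n" for n
  proof (cases "n \<in> {-1,0}")
    case True
    have "Linf_norm_on g1 (real_of_int n) (real_of_int n + 1) \<le> ennreal 2"
      by (rule Linf_le) (rule g1_bound)
    then show ?thesis using True by simp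
  next
    case False
    then have n: "1 \<le> n \<or> n \<le> -2" by auto
    have "Linf_norm_on g1 (real_of_int n) (real_of_int n + 1) \<le> ennreal 0"
    proof (rule Linf_le)
      fix t assume "real_of_int n \<le> t" "t \<le> real_of_int n + 1"
      then have "1 \<le> \<bar>t\<bar>" using n by (auto simp: abs_if)
      then show "norm (g1 t) \<le> 0" by (simp add: g1_out)
    qed
    then show ?thesis using False by simp
  qed
  have "(\<integral>\<^sup>+ n. Linf_norm_on g1 (real_of_int n) (real_of_int n + 1) \<partial>count_space (UNIV :: int set))
     \<le> (\<integral>\<^sup>+ n. ennreal 2 * indicator {-1,0} n \<partial>count_space (UNIV :: int set))"
    by (rule nn_integral_mono) (rule gi)
  also have "\<dots> = ennreal 2 * emeasure (count_space UNIV) {-1, 0::int}"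
    by (rule nn_integral_cmult_indicator) simp
  also have "\<dots> = ennreal 2 * 2" by (simp add: emeasure_count_space_finite)
  also have "\<dots> < \<infinity>" using ennreal_mult[of 2 2] by simp
  finally show ?thesis .
qed

lemma ftt_int_bound:
  fixes j :: int
  assumes x: "real_of_int j \<le> x" "x \<le> real_of_int j + 1"
  shows "ftt 1 x \<le> 8 / ((real_of_int j)^2 + 1)"
proof -
  have cases: "1 \<le> j \<or> j \<le> -2 \<or> j = 0 \<or> j = -1" by arith
  moreover {
    assume j: "1 \<le> j"
    then have x0: "x \<noteq> 0" "1 \<le> x" "real_of_int j \<le> x" using x by auto
    have "ftt 1 x \<le> 1 / (x^2 * 1)" using ftt_le2[of 1 x] x0 by simp
    also have "\<dots> \<le> 1 / (real_of_int j)^2"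
      using x0 j by (intro divide_left_mono power_mono) auto
    also have "\<dots> \<le> 8 / ((real_of_int j)^2 + 1)"
    proof -
      have "1 \<le> (real_of_int j)^2" using j by simp
      then have "(real_of_int j)^2 + 1 \<le> 8 * (real_of_int j)^2" "0 < (real_of_int j)^2" by linarith+
      then show ?thesis by (simp add: divide_simps)
    qed
    finally have ?thesis .
  } moreover {
    assume j: "j \<le> -2"
    then have x0: "x \<noteq> 0" "x \<le> -1" using x by auto
    have a: "- real_of_int j / 2 \<le> - x" using x j by linarith
    have "(- real_of_int j / 2)^2 \<le> (- x)^2" by (rule power_mono[OF a]) (use j in simp)
    then have sq: "(real_of_int j)^2 / 4 \<le> x^2" by (simp add: power_divide)
    have "ftt 1 x \<le> 1 / (x^2 * 1)" using ftt_le2[of 1 x] x0 by simp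
    also have "\<dots> \<le> 1 / ((real_of_int j)^2 / 4)"
    proof -
      have "0 < x^2" "0 < (real_of_int j)^2" using x0 j by auto
      then show ?thesis using sq by (intro divide_left_mono) auto
    qed
    also have "\<dots> \<le> 8 / ((real_of_int j)^2 + 1)"
    proof -
      have "(2::real)^2 \<le> (- real_of_int j)^2" by (rule power_mono) (use j in auto)
      then have "1 \<le> (real_of_int j)^2" by simp
      then have "(real_of_int j)^2 + 1 \<le> 2 * (real_of_int j)^2" "0 < (real_of_int j)^2" by linarith+
      then show ?thesis by (simp add: divide_simps)
    qed
    finally have ?thesis .
  } moreover {
    assume j: "j = 0 \<or> j = -1"
    have "ftt 1 x \<le> 1" by (rule ftt1_le1)
    also have "\<dots> \<le> 8 / ((real_of_int j)^2 + 1)" using j by auto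
    finally have ?thesis .
  }
  ultimately show ?thesis by blast
qed

lemma int_decode_bound: "real n \<le> 2 * \<bar>real_of_int (int_decode n)\<bar> + 1"
proof (cases "even n")
  case True
  then have "int_decode n = int (n div 2)" by (simp add: int_decode_def sum_decode_def)
  then show ?thesis using True by (auto elim!: evenE)
next
  case False
  then have "int_decode n = - int (n div 2) - 1" by (simp add: int_decode_def sum_decode_def)
  then show ?thesis using False by (auto elim!: oddE)
qed

lemma Q_fin: "(\<integral>\<^sup>+ m. ennreal (8 / ((real_of_int m)^2 + 1)) \<partial>count_space (UNIV :: int set)) < \<infinity>"
proof -
  let ?w = "\<lambda>n::nat. 64 / ((real n)^2 + 1)"
  have sw: "summable ?w"
  proof (rule summable_comparison_test'[where N=1])
    show "summable (\<lambda>n. 64 * inverse (real n ^ 2))"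
      by (rule summable_mult, rule inverse_power_summable) simp
    fix n :: nat assume "1 \<le> n"
    then show "norm (?w n) \<le> 64 * inverse (real n ^ 2)"
      by (simp add: divide_simps) (use zero_le_power2[of "real n"] in linarith)
  qed
  have "(\<integral>\<^sup>+ m. ennreal (8 / ((real_of_int m)^2 + 1)) \<partial>count_space (UNIV :: int set))
      = (\<integral>\<^sup>+ n. ennreal (8 / ((real_of_int (int_decode n))^2 + 1)) \<partial>count_space (UNIV :: nat set))"
    by (rule nn_integral_bij_count_space[symmetric]) (rule bij_int_decode)
  also have "\<dots> = (\<Sum>n. ennreal (8 / ((real_of_int (int_decode n))^2 + 1)))"
    by (rule nn_integral_count_space_nat)
  also have "\<dots> \<le> (\<Sum>n. ennreal (?w n))"
  proof (rule suminf_le[OF _ summableI summableI])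
    fix n
    let ?a = "\<bar>real_of_int (int_decode n)\<bar>"
    have h1: "(real n)^2 \<le> (2 * ?a + 1)^2" using int_decode_bound[of n] by (intro power_mono) simp_all
    have h3: "?a^2 = (real_of_int (int_decode n))^2" by simp
    have h2: "(2 * ?a + 1)^2 + 1 \<le> 8 * (?a^2 + 1)"
    proof -
      have "0 \<le> (2 * ?a - 1)^2" by simp
      then show ?thesis by (simp add: power2_sum power2_diff)
    qed
    have "(real n)^2 + 1 \<le> (2 * ?a + 1)^2 + 1" using h1 by (rule add_right_mono)
    also note h2
    also have "8 * (?a^2 + 1) = 8 * ((real_of_int (int_decode n))^2 + 1)" by (simp only: h3)
    finally have "(real n)^2 + 1 \<le> 8 * ((real_of_int (int_decode n))^2 + 1)" .
    then have "64 / (8 * ((real_of_int (int_decode n))^2 + 1)) \<le> ?w n"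
      by (intro divide_left_mono) (auto intro!: mult_pos_pos add_nonneg_pos)
    moreover have "64 / (8 * M) = 8 / M" for M :: real
      by (simp add: divide_divide_eq_left[symmetric])
    ultimately have "8 / ((real_of_int (int_decode n))^2 + 1) \<le> ?w n" by metis
    then show "ennreal (8 / ((real_of_int (int_decode n))^2 + 1)) \<le> ennreal (?w n)" by (rule ennreal_leI)
  qed
  also have "\<dots> = ennreal (\<Sum>n. ?w n)" by (rule suminf_ennreal2[OF _ sw]) simp
  also have "\<dots> < \<infinity>" by simp
  finally show ?thesis .
qed



definition DD :: "nat \<Rightarrow> int \<Rightarrow> real" where
  "DD k n = cc k * (8 / ((real_of_int (n - 4^k))^2 + 1))"

lemma DD_nn: "0 \<le> DD k n"
  by (simp add: DD_def less_imp_le[OF cc_pos] add_nonneg_pos)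

lemma DD_summable: "summable (\<lambda>k. DD k n)"
proof (rule summable_comparison_test[OF _ summable_mult[OF summable_cc, of 8]])
  show "\<exists>N. \<forall>k\<ge>N. norm (DD k n) \<le> 8 * cc k"
  proof (intro exI allI impI)
    fix k
    have "8 / ((real_of_int (n - 4^k))^2 + 1) \<le> 8"
      by (simp add: divide_le_eq add_nonneg_pos)
    then have "DD k n \<le> cc k * 8" unfolding DD_def by (intro mult_left_mono) (auto simp: less_imp_le[OF cc_pos])
    then show "norm (DD k n) \<le> 8 * cc k" using DD_nn[of k n] by (simp add: mult.commute)
  qed
qed

lemma GL: "Linf_norm_on G1 (real_of_int n) (real_of_int n + 1) \<le> ennreal (\<Sum>k. DD k n)"
proof (rule Linf_le)
  fix \<xi> assume \<xi>: "real_of_int n \<le> \<xi>" "\<xi> \<le> real_of_int n + 1"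
  have "(\<Sum>k. cc k * ftt 1 (\<xi> - nn k)) \<le> (\<Sum>k. DD k n)"
  proof (rule suminf_le[OF _ ftt1_summable DD_summable])
    fix k
    have e: "real_of_int (n - 4^k) = real_of_int n - nn k" by (simp add: nn_def)
    have "ftt 1 (\<xi> - nn k) \<le> 8 / ((real_of_int (n - 4^k))^2 + 1)"
      by (rule ftt_int_bound) (use \<xi> e in auto)
    then show "cc k * ftt 1 (\<xi> - nn k) \<le> DD k n"
      unfolding DD_def by (rule mult_left_mono) (simp add: less_imp_le[OF cc_pos])
  qed
  then show "norm (G1 \<xi>) \<le> (\<Sum>k. DD k n)" by (simp add: G1_norm)
qed

lemma bij_shift: "bij_betw (\<lambda>n::int. n - c) UNIV UNIV"
  by (rule bij_betwI[of _ _ _ "\<lambda>m. m + c"]) auto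

lemma ncs_G1_part: "(\<integral>\<^sup>+ n. Linf_norm_on G1 (real_of_int n) (real_of_int n + 1) \<partial>count_space (UNIV :: int set)) < \<infinity>"
proof -
  define Q where "Q = (\<integral>\<^sup>+ m. ennreal (8 / ((real_of_int m)^2 + 1)) \<partial>count_space (UNIV :: int set))"
  have "(\<integral>\<^sup>+ n. Linf_norm_on G1 (real_of_int n) (real_of_int n + 1) \<partial>count_space (UNIV :: int set))
      \<le> (\<integral>\<^sup>+ n. (\<Sum>k. ennreal (DD k n)) \<partial>count_space (UNIV :: int set))"
  proof (rule nn_integral_mono)
    fix n :: int
    have "ennreal (\<Sum>k. DD k n) = (\<Sum>k. ennreal (DD k n))"
      by (rule suminf_ennreal2[symmetric, OF DD_nn DD_summable])
    then show "Linf_norm_on G1 (real_of_int n) (real_of_int n + 1) \<le> (\<Sum>k. ennreal (DD k n))"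
      using GL[of n] by simp
  qed
  also have "\<dots> = (\<Sum>k. \<integral>\<^sup>+ n. ennreal (DD k n) \<partial>count_space (UNIV :: int set))"
    by (rule nn_integral_suminf) simp
  also have "\<dots> = (\<Sum>k. ennreal (cc k) * Q)"
  proof (rule suminf_cong)
    fix k
    let ?f = "\<lambda>m::int. ennreal (cc k * (8 / ((real_of_int m)^2 + 1)))"
    have "(\<integral>\<^sup>+ n. ennreal (DD k n) \<partial>count_space (UNIV :: int set))
        = (\<integral>\<^sup>+ n. ?f (n - 4^k) \<partial>count_space (UNIV :: int set))"
      by (simp add: DD_def)
    also have "\<dots> = (\<integral>\<^sup>+ m. ?f m \<partial>count_space (UNIV :: int set))"
      by (rule nn_integral_bij_count_space[OF bij_shift])
    also have "\<dots> = (\<integral>\<^sup>+ m. ennreal (cc k) * ennreal (8 / ((real_of_int m)^2 + 1)) \<partial>count_space (UNIV :: int set))"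
      by (rule nn_integral_cong, rule ennreal_mult) (auto simp: less_imp_le[OF cc_pos] add_nonneg_pos)
    also have "\<dots> = ennreal (cc k) * Q"
      unfolding Q_def by (rule nn_integral_cmult) simp
    finally show "(\<integral>\<^sup>+ n. ennreal (DD k n) \<partial>count_space (UNIV :: int set)) = ennreal (cc k) * Q" .
  qed
  also have "\<dots> = (\<Sum>k. ennreal (cc k)) * Q" by (rule ennreal_suminf_multc)
  also have "(\<Sum>k. ennreal (cc k)) = ennreal 2"
    unfolding suminf_cc[symmetric] by (rule suminf_ennreal2) (auto simp: less_imp_le[OF cc_pos] summable_cc)
  also have "ennreal 2 * Q < \<infinity>"
    using Q_fin unfolding Q_def by (simp add: ennreal_mult_less_top)
  finally show ?thesis .
qed

lemma ncss_g1: "\<not> cond_star_star g1 G1"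
  unfolding cond_star_star_def using ncs_g1_part ncs_G1_part by auto

lemma part1: "\<exists>g G. square_integrable g \<and> is_L2_fourier g G \<and> cond_star g G \<and> \<not> cond_star_star g G"
  using sqint_g1 L2_g1 cs_g1 ncss_g1 by blast

theorem mainTheorem8:
  shows "(\<exists>g G. square_integrable g \<and> is_L2_fourier g G \<and>
            cond_star g G \<and> \<not> cond_star_star g G)
       \<and> (\<exists>g G. square_integrable g \<and> is_L2_fourier g G \<and>
            cond_star_star g G \<and> \<not> cond_star g G)"
  using part1 part2 by blast


end
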